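(* Let $\mathbb{T}$ be a regular torus of type S or type L of the regularized planar two-center problem, with rotation number $W$, and let $\gamma$ be an orbit on $\mathbb{T}$ which, for all times, stays at a positive distance (with respect to the flat metric in the angle coordinates) from the set of collision points. Then $W$ is rational.
   Context: Fix $d>0$ and masses $m_1,m_2>0$ at $(-d,0)$ and $(d,0)$. A test particle moves with Hamiltonian $H=\tfrac12(p_x^2+p_y^2)-m_1/\sqrt{(x+d)^2+y^2}-m_2/\sqrt{(x-d)^2+y^2}$; energies $h<0$. Regularization: $(\lambda,\nu)\in\mathbb{R}\times(\mathbb{R}/2\pi\mathbb{Z})$ with $x+iy=d\sin(\nu+i\lambda)$ (a double cover branched over the centers), conjugate momenta $p_\lambda,p_\nu$, time change $dt=d^2(\cosh^2\lambda-\sin^2\nu)\,d\tau$. On $H=h$ the motion becomes the flow (time $\tau$) of $H_\lambda+H_\nu$ on its zero level, $H_\lambda=\tfrac12p_\lambda^2-d(m_1+m_2)\cosh\lambda-hd^2\cosh^2\lambda$, $H_\nu=\tfrac12p_\nu^2+d(m_1-m_2)\sin\nu+hd^2\sin^2\nu$; orbits lie in sets $\{H_\lambda=-g,\ H_\nu=g\}$ for a separation constant $g$. Regular torus: a compact connected component $\mathbb{T}=C_\lambda\times C_\nu$ of such a set with $-g$ a regular value of $H_\lambda$ and $g$ a regular value of $H_\nu$ ($C_\lambda$ a closed curve in the $(\lambda,p_\lambda)$-plane, $C_\nu$ a closed curve in the cylinder $(\mathbb{R}/2\pi\mathbb{Z})\times\mathbb{R}$). Type S: $C_\nu$ contractible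 in the cylinder; type L: $C_\nu$ winds around the cylinder and $C_\lambda$ meets $\{\lambda=0\}$. Rotation number $W=T_\nu/T_\lambda$, where $T_\lambda,T_\nu$ are the $\tau$-periods of the motions on $C_\lambda,C_\nu$; in angle coordinates $\theta_1$ along $C_\nu$, $\theta_2$ along $C_\lambda$ (each in $\mathbb{R}/\mathbb{Z}$, increasing uniformly in $\tau$ with period 1) orbits on $\mathbb{T}$ lift to lines $\theta_2=W\theta_1+\mathrm{const}$. Collision points are the points of $\mathbb{T}$ with $\lambda=0$ and $\nu\equiv\pm\pi/2\pmod{2\pi}$ (they project to the two centers). *)

theory Defs
  imports "HOL-Analysis.Analysis"
begin

text \<open>Separated regularized Hamiltonians of the planar two-center problem
  (parameters d, m1, m2, energy h; coordinates (lambda, p_lambda) resp. (nu, p_nu)).\<close>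

definition Hlam :: "real \<Rightarrow> real \<Rightarrow> real \<Rightarrow> real \<Rightarrow> real \<Rightarrow> real \<Rightarrow> real" where
  "Hlam d m1 m2 h l p = p\<^sup>2 / 2 - d * (m1 + m2) * cosh l - h * d\<^sup>2 * (cosh l)\<^sup>2"

definition Hnu :: "real \<Rightarrow> real \<Rightarrow> real \<Rightarrow> real \<Rightarrow> real \<Rightarrow> real \<Rightarrow> real" where
  "Hnu d m1 m2 h n p = p\<^sup>2 / 2 + d * (m1 - m2) * sin n + h * d\<^sup>2 * (sin n)\<^sup>2"

definition regular_value :: "(real \<Rightarrow> real \<Rightarrow> real) \<Rightarrow> real \<Rightarrow> bool" where
  "regular_value H c \<longleftrightarrow>
     (\<forall>q p. H q p = c \<longrightarrow>
        (deriv (\<lambda>q'. H q' p) q, deriv (\<lambda>p'. H q p') p) \<noteq> (0, 0))"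

definition hamiltonian_solution :: "(real \<Rightarrow> real \<Rightarrow> real) \<Rightarrow> (real \<Rightarrow> real \<times> real) \<Rightarrow> bool" where
  "hamiltonian_solution H z \<longleftrightarrow>
     (\<forall>t. ((\<lambda>s. fst (z s)) has_real_derivative
              deriv (\<lambda>p. H (fst (z t)) p) (snd (z t))) (at t) \<and>
          ((\<lambda>s. snd (z s)) has_real_derivative
              - deriv (\<lambda>q. H q (snd (z t))) (fst (z t))) (at t))"

text \<open>The cylinder (R/2piZ) x R, realised as {(w,p). |w| = 1} via nu \<mapsto> cis nu.\<close>
definition cyl_proj :: "real \<times> real \<Rightarrow> complex \<times> real" where
  "cyl_proj z = (cis (fst z), snd z)"

definition cylinder :: "(complex \<times> real) set" where
  "cylinder = range cyl_proj"

definition contractible_in :: "'a::topological_space set \<Rightarrow> 'a set \<Rightarrow> bool" where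
  "contractible_in C X \<longleftrightarrow> (\<exists>c. homotopic_with_canon (\<lambda>f. True) C X id (\<lambda>x. c))"

definition minimal_period :: "(real \<Rightarrow> 'a) \<Rightarrow> real \<Rightarrow> bool" where
  "minimal_period f T \<longleftrightarrow> T > 0 \<and> (\<forall>t. f (t + T) = f t) \<and>
     (\<forall>S. 0 < S \<and> S < T \<longrightarrow> \<not> (\<forall>t. f (t + S) = f t))"

definition flat_torus_dist :: "real \<times> real \<Rightarrow> real \<times> real \<Rightarrow> real" where
  "flat_torus_dist u v = (INF k \<in> (\<int> \<times> \<int>). dist u (v + k))"

definition collision_nu :: "real \<Rightarrow> bool" where
  "collision_nu n \<longleftrightarrow> (\<exists>k::int. n = pi/2 + 2 * of_int k * pi \<or> n = - pi/2 + 2 * of_int k * pi)"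

end

theory Submission
  imports Defs
begin


locale hsys =
  fixes U U' U'' :: "real \<Rightarrow> real"
  assumes dU: "\<And>x. (U has_real_derivative U' x) (at x)"
    and dU': "\<And>x. (U' has_real_derivative U'' x) (at x)"
    and cU'': "\<And>x. isCont U'' x"
begin

definition en :: "real \<times> real \<Rightarrow> real" where
  "en w = (snd w)\<^sup>2 / 2 + U (fst w)"

definition sol :: "(real \<Rightarrow> real \<times> real) \<Rightarrow> bool" where
  "sol z \<longleftrightarrow> (\<forall>t. ((\<lambda>s. fst (z s)) has_real_derivative snd (z t)) (at t) \<and>
      ((\<lambda>s. snd (z s)) has_real_derivative - U' (fst (z t))) (at t))"

definition regE :: "real \<Rightarrow> bool" where
  "regE E \<longleftrightarrow> (\<forall>q p. p\<^sup>2 / 2 + U q = E \<longrightarrow> U' q \<noteq> 0 \<or> p \<noteq> 0)"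

lemma cU': "isCont U' x"
  using dU' DERIV_isCont by blast

lemma sol_D1: "sol z \<Longrightarrow> ((\<lambda>s. fst (z s)) has_real_derivative snd (z t)) (at t)"
  unfolding sol_def by blast
lemma sol_D2: "sol z \<Longrightarrow> ((\<lambda>s. snd (z s)) has_real_derivative - U' (fst (z t))) (at t)"
  unfolding sol_def by blast

lemma sol_cont1: "sol z \<Longrightarrow> isCont (\<lambda>s. fst (z s)) t"
  using sol_D1 DERIV_isCont by blast
lemma sol_cont2: "sol z \<Longrightarrow> isCont (\<lambda>s. snd (z s)) t"
  using sol_D2 DERIV_isCont by blast

lemma sol_cont: assumes "sol z" shows "continuous_on S z"
proof -
  have "continuous_on S (\<lambda>s. (fst (z s), snd (z s)))"
    apply (intro continuous_on_Pair)
    using sol_cont1[OF assms] sol_cont2[OF assms] continuous_at_imp_continuous_on by blast+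
  then show ?thesis by simp
qed

lemma sol_energy: assumes "sol z" shows "en (z t) = en (z 0)"
proof -
  have "((\<lambda>s. en (z s)) has_real_derivative 0) (at s)" for s
  proof -
    have d2: "((\<lambda>s. snd (z s)) has_real_derivative - U' (fst (z s))) (at s)" by (rule sol_D2[OF assms])
    have dU2: "((\<lambda>s. U (fst (z s))) has_real_derivative U' (fst (z s)) * snd (z s)) (at s)"
      by (rule DERIV_chain2[OF dU sol_D1[OF assms]])
    have dp: "((\<lambda>s. snd (z s) * snd (z s)) has_real_derivative (- U' (fst (z s))) * snd (z s) + (- U' (fst (z s))) * snd (z s)) (at s)"
      by (rule DERIV_mult[OF d2 d2])
    have "((\<lambda>s. snd (z s) * snd (z s) / 2 + U (fst (z s))) has_real_derivative
        ((- U' (fst (z s))) * snd (z s) + (- U' (fst (z s))) * snd (z s)) / 2 + U' (fst (z s)) * snd (z s)) (at s)"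
      by (intro DERIV_add DERIV_cdivide dp dU2)
    then show ?thesis unfolding en_def by (simp add: power2_eq_square)
  qed
  then show ?thesis using DERIV_isconst_all by blast
qed

lemma sol_shift: assumes "sol z" shows "sol (\<lambda>t. z (t + c))"
  unfolding sol_def
proof
  fix t
  show "((\<lambda>s. fst (z (s + c))) has_real_derivative snd (z (t + c))) (at t) \<and>
     ((\<lambda>s. snd (z (s + c))) has_real_derivative - U' (fst (z (t + c)))) (at t)"
    using sol_D1[OF assms, of "t+c"] sol_D2[OF assms, of "t+c"]
    by (simp add: DERIV_shift)
qed

lemma loc_lip: "\<exists>L\<ge>0. \<forall>x y. \<bar>x\<bar> \<le> M \<longrightarrow> \<bar>y\<bar> \<le> M \<longrightarrow> \<bar>U' x - U' y\<bar> \<le> L * \<bar>x - y\<bar>"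
proof -
  have "continuous_on {-\<bar>M\<bar>..\<bar>M\<bar>} (\<lambda>x. \<bar>U'' x\<bar>)"
    by (intro continuous_at_imp_continuous_on ballI isCont_rabs cU'')
  then obtain x0 where x0: "x0 \<in> {-\<bar>M\<bar>..\<bar>M\<bar>}" and B: "\<forall>y\<in>{-\<bar>M\<bar>..\<bar>M\<bar>}. \<bar>U'' y\<bar> \<le> \<bar>U'' x0\<bar>"
    using continuous_attains_sup[of "{-\<bar>M\<bar>..\<bar>M\<bar>}" "\<lambda>x. \<bar>U'' x\<bar>"] by auto
  have key: "\<bar>U' x - U' y\<bar> \<le> \<bar>U'' x0\<bar> * \<bar>x - y\<bar>" if "\<bar>x\<bar> \<le> M" "\<bar>y\<bar> \<le> M" "x < y" for x y
  proof -
    obtain c where c: "x < c" "c < y" "U' y - U' x = (y - x) * U'' c"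
      using MVT2[of x y U' U''] dU' \<open>x < y\<close> by blast
    have "c \<in> {-\<bar>M\<bar>..\<bar>M\<bar>}" using c that by auto
    then have "\<bar>U'' c\<bar> \<le> \<bar>U'' x0\<bar>" using B by blast
    then have "\<bar>(y - x) * U'' c\<bar> \<le> \<bar>U'' x0\<bar> * \<bar>x - y\<bar>"
      by (simp add: abs_mult mult.commute mult_right_mono abs_minus_commute)
    with c show ?thesis by (simp add: abs_minus_commute)
  qed
  have "\<bar>U' x - U' y\<bar> \<le> \<bar>U'' x0\<bar> * \<bar>x - y\<bar>" if "\<bar>x\<bar> \<le> M" "\<bar>y\<bar> \<le> M" for x y
  proof (cases x y rule: linorder_cases)
    case less then show ?thesis using key that by blast
  next
    case equal then show ?thesis by simp
  next
    case greater then show ?thesis using key[of y x] that by (simp add: abs_minus_commute)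
  qed
  then show ?thesis by (intro exI[of _ "\<bar>U'' x0\<bar>"]) auto
qed

lemma local_unique:
  assumes s1: "sol z1" and s2: "sol z2" and eq: "z1 s = z2 s"
  shows "\<exists>e>0. \<forall>t. \<bar>t - s\<bar> < e \<longrightarrow> z1 t = z2 t"
proof -
  define M where "M = \<bar>fst (z1 s)\<bar> + 1"
  obtain L where L0: "L \<ge> 0" and L: "\<And>x y. \<bar>x\<bar> \<le> M \<Longrightarrow> \<bar>y\<bar> \<le> M \<Longrightarrow> \<bar>U' x - U' y\<bar> \<le> L * \<bar>x - y\<bar>"
    using loc_lip[of M] by blast
  obtain d1 where d1: "d1 > 0" "\<And>t. \<bar>t - s\<bar> < d1 \<Longrightarrow> \<bar>fst (z1 t) - fst (z1 s)\<bar> < 1"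
    using sol_cont1[OF s1, of s] unfolding continuous_at_eps_delta dist_real_def
    by (meson zero_less_one)
  obtain d2 where d2: "d2 > 0" "\<And>t. \<bar>t - s\<bar> < d2 \<Longrightarrow> \<bar>fst (z2 t) - fst (z2 s)\<bar> < 1"
    using sol_cont1[OF s2, of s] unfolding continuous_at_eps_delta dist_real_def
    by (meson zero_less_one)
  define e where "e = min d1 d2"
  have e: "e > 0" using d1 d2 by (simp add: e_def)
  have bnd: "\<bar>fst (z1 t)\<bar> \<le> M \<and> \<bar>fst (z2 t)\<bar> \<le> M" if "\<bar>t - s\<bar> < e" for t
    using d1(2)[of t] d2(2)[of t] that eq by (auto simp: e_def M_def)
  define a where "a t = fst (z1 t) - fst (z2 t)" for t
  define b where "b t = snd (z1 t) - snd (z2 t)" for t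
  define db where "db t = - U' (fst (z1 t)) + U' (fst (z2 t))" for t
  define u where "u t = a t * a t + b t * b t" for t
  define u' where "u' t = (b t * a t + b t * a t) + (db t * b t + db t * b t)" for t
  have da: "(a has_real_derivative b t) (at t)" for t
    unfolding a_def b_def by (intro DERIV_diff sol_D1[OF s1] sol_D1[OF s2])
  have ddb: "(b has_real_derivative db t) (at t)" for t
    unfolding b_def db_def using DERIV_diff[OF sol_D2[OF s1] sol_D2[OF s2], of t] by simp
  have du: "(u has_real_derivative u' t) (at t)" for t
    unfolding u_def u'_def by (intro DERIV_add DERIV_mult da ddb)
  have u0: "u t \<ge> 0" for t unfolding u_def by simp
  have us: "u s = 0" using eq by (simp add: u_def a_def b_def)
  define K where "K = 1 + L"
  have ub: "\<bar>u' t\<bar> \<le> K * u t" if "\<bar>t - s\<bar> < e" for t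
  proof -
    have "\<bar>db t\<bar> \<le> L * \<bar>a t\<bar>" using L[of "fst (z1 t)" "fst (z2 t)"] bnd[OF that]
      by (simp add: db_def a_def abs_minus_commute)
    then have "\<bar>db t * b t\<bar> \<le> L * \<bar>a t\<bar> * \<bar>b t\<bar>" by (simp add: abs_mult mult_right_mono)
    moreover have "2 * (\<bar>a t\<bar> * \<bar>b t\<bar>) \<le> a t * a t + b t * b t"
      using sum_squares_bound[of "\<bar>a t\<bar>" "\<bar>b t\<bar>"] by (simp add: power2_eq_square)
    moreover have "\<bar>u' t\<bar> \<le> 2 * \<bar>b t * a t\<bar> + 2 * \<bar>db t * b t\<bar>"
    proof -
      have "\<bar>u' t\<bar> \<le> \<bar>b t * a t + b t * a t\<bar> + \<bar>db t * b t + db t * b t\<bar>"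
        unfolding u'_def by (rule abs_triangle_ineq)
      also have "\<dots> = 2 * \<bar>b t * a t\<bar> + 2 * \<bar>db t * b t\<bar>" by (simp add: abs_mult)
      finally show ?thesis .
    qed
    moreover have "\<bar>b t * a t\<bar> = \<bar>a t\<bar> * \<bar>b t\<bar>" by (simp add: abs_mult)
    moreover have "L * \<bar>a t\<bar> * \<bar>b t\<bar> = L * (\<bar>a t\<bar> * \<bar>b t\<bar>)" by simp
    ultimately have "\<bar>u' t\<bar> \<le> 2 * (\<bar>a t\<bar> * \<bar>b t\<bar>) + L * (2 * (\<bar>a t\<bar> * \<bar>b t\<bar>))"
      by linarith
    also have "\<dots> \<le> (a t * a t + b t * b t) + L * (a t * a t + b t * b t)"
      using \<open>2 * (\<bar>a t\<bar> * \<bar>b t\<bar>) \<le> a t * a t + b t * b t\<close> L0 by (intro add_mono mult_left_mono) auto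
    finally show ?thesis by (simp add: K_def u_def algebra_simps)
  qed
  have "z1 t = z2 t" if "\<bar>t - s\<bar> < e" for t
  proof -
    have "u t \<le> 0"
    proof (cases "s \<le> t")
      case True
      define w where "w t = u t * exp (- K * t)" for t
      have "w t \<le> w s"
      proof (rule DERIV_nonpos_imp_nonincreasing[OF True])
        fix x assume x: "s \<le> x" "x \<le> t"
        then have xe: "\<bar>x - s\<bar> < e" using that by auto
        have "(w has_real_derivative u' x * exp (- K * x) + exp (- K * x) * (- K) * u x) (at x)"
          unfolding w_def by (intro DERIV_mult du) (auto intro!: derivative_eq_intros)
        moreover have "u' x * exp (- K * x) + exp (- K * x) * (- K) * u x \<le> 0"
        proof -
          have "u' x - K * u x \<le> 0" using ub[OF xe] by linarith
          then have "(u' x - K * u x) * exp (- K * x) \<le> 0" by (simp add: mult_nonpos_nonneg)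
          then show ?thesis by (simp add: algebra_simps)
        qed
        ultimately show "\<exists>y. (w has_real_derivative y) (at x) \<and> y \<le> 0" by blast
      qed
      then have "u t * exp (- K * t) \<le> 0" using us by (simp add: w_def)
      then show ?thesis by (simp add: mult_le_0_iff)
    next
      case False
      then have ts: "t \<le> s" by simp
      define w where "w t = u t * exp (K * t)" for t
      have "w t \<le> w s"
      proof (rule DERIV_nonneg_imp_nondecreasing[OF ts])
        fix x assume x: "t \<le> x" "x \<le> s"
        then have xe: "\<bar>x - s\<bar> < e" using that by auto
        have "(w has_real_derivative u' x * exp (K * x) + exp (K * x) * K * u x) (at x)"
          unfolding w_def by (intro DERIV_mult du) (auto intro!: derivative_eq_intros)
        moreover have "u' x * exp (K * x) + exp (K * x) * K * u x \<ge> 0"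
        proof -
          have "u' x + K * u x \<ge> 0" using ub[OF xe] by linarith
          then have "(u' x + K * u x) * exp (K * x) \<ge> 0" by simp
          then show ?thesis by (simp add: algebra_simps)
        qed
        ultimately show "\<exists>y. (w has_real_derivative y) (at x) \<and> 0 \<le> y" by blast
      qed
      then have "u t * exp (K * t) \<le> 0" using us by (simp add: w_def)
      then show ?thesis by (simp add: mult_le_0_iff)
    qed
    with u0[of t] have "u t = 0" by linarith
    then have "a t = 0" "b t = 0" unfolding u_def
      by (simp_all add: sum_squares_eq_zero_iff)
    then show ?thesis unfolding a_def b_def by (simp add: prod_eq_iff)
  qed
  with e show ?thesis by blast
qed

lemma sol_unique:
  assumes s1: "sol z1" and s2: "sol z2" and eq: "z1 t0 = z2 t0"
  shows "z1 t = z2 t"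
proof -
  define S where "S = {t. z1 t = z2 t}"
  have "closed S" unfolding S_def
    by (rule closed_Collect_eq) (rule sol_cont[OF s1], rule sol_cont[OF s2])
  moreover have "open S"
    unfolding open_dist
  proof
    fix s assume "s \<in> S"
    then have "z1 s = z2 s" by (simp add: S_def)
    then obtain e where "e > 0" "\<forall>t. \<bar>t - s\<bar> < e \<longrightarrow> z1 t = z2 t"
      using local_unique[OF s1 s2] by blast
    then show "\<exists>e>0. \<forall>y. dist y s < e \<longrightarrow> y \<in> S" by (auto simp: dist_real_def S_def)
  qed
  ultimately have "S = {} \<or> S = UNIV" using clopen[of S] by simp
  moreover have "t0 \<in> S" using eq by (simp add: S_def)
  ultimately show ?thesis by (auto simp: S_def)
qed

end

context hsys begin

lemma en_sol: "sol z \<Longrightarrow> en (z t) = en (z s)"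
  using sol_energy by metis

lemma fst_dist: "\<bar>fst w - fst v\<bar> \<le> dist w v"
  using dist_fst_le[of w v] by (simp add: dist_real_def)
lemma snd_dist: "\<bar>snd w - snd v\<bar> \<le> dist w v"
  using dist_snd_le[of w v] by (simp add: dist_real_def)

lemma cover_pos:
  assumes sz: "sol z" and pos: "snd (z t0) > 0"
  shows "\<exists>r>0. \<forall>w. en w = en (z t0) \<longrightarrow> dist w (z t0) < r \<longrightarrow> (\<exists>t. z t = w)"
proof -
  define p0 where "p0 = snd (z t0)"
  define q0 where "q0 = fst (z t0)"
  have p0: "p0 > 0" using pos by (simp add: p0_def)
  then have "p0 / 2 > 0" by simp
  then obtain \<eta> where \<eta>: "\<eta> > 0" "\<And>t. \<bar>t - t0\<bar> < \<eta> \<Longrightarrow> \<bar>snd (z t) - p0\<bar> < p0 / 2"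
    using sol_cont2[OF sz, of t0] unfolding continuous_at_eps_delta dist_real_def p0_def by blast
  define h where "h = \<eta> / 2"
  have h: "h > 0" using \<eta> by (simp add: h_def)
  have pp: "snd (z t) > p0 / 2" if "t0 - h \<le> t" "t \<le> t0 + h" for t
  proof -
    have tt: "\<bar>t - t0\<bar> < \<eta>" using that \<eta>(1) by (auto simp: h_def)
    have "\<bar>snd (z t) - p0\<bar> < \<bar>p0\<bar> / 2" using \<eta>(2)[OF tt] p0 by simp
    then show ?thesis using p0 by (simp only: abs_less_iff) linarith
  qed
  have incr: "fst (z a) < fst (z b)" if "t0 - h \<le> a" "a < b" "b \<le> t0 + h" for a b
  proof (rule DERIV_pos_imp_increasing[OF \<open>a < b\<close>])
    fix x assume "a \<le> x" "x \<le> b"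
    then have "snd (z x) > 0" using pp[of x] that p0 by auto
    then show "\<exists>y. ((\<lambda>s. fst (z s)) has_real_derivative y) (at x) \<and> 0 < y"
      using sol_D1[OF sz, of x] by blast
  qed
  define r where "r = min (p0 / 2) (min (q0 - fst (z (t0 - h))) (fst (z (t0 + h)) - q0))"
  have r: "r > 0" using incr[of "t0 - h" t0] incr[of t0 "t0 + h"] h p0
    by (auto simp: r_def q0_def)
  have "\<exists>t. z t = w" if w: "en w = en (z t0)" "dist w (z t0) < r" for w
  proof -
    have d1: "\<bar>fst w - q0\<bar> < r" using fst_dist[of w "z t0"] w by (simp add: q0_def)
    have d2: "\<bar>snd w - p0\<bar> < r" using snd_dist[of w "z t0"] w by (simp add: p0_def)
    have "\<bar>snd w - p0\<bar> < p0 / 2" using d2 by (simp add: r_def)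
    then have sw: "snd w > 0" using p0 by (simp only: abs_less_iff) linarith
    have "fst (z (t0 - h)) \<le> fst w" "fst w \<le> fst (z (t0 + h))" using d1 by (auto simp: r_def)
    then obtain t where t: "t0 - h \<le> t" "t \<le> t0 + h" "fst (z t) = fst w"
      using IVT[of "\<lambda>s. fst (z s)" "t0 - h" "fst w" "t0 + h"] sol_cont1[OF sz] h by auto
    have "en (z t) = en w" using w en_sol[OF sz, of t t0] by simp
    then have "(snd (z t))\<^sup>2 = (snd w)\<^sup>2" using t by (simp add: en_def)
    moreover have "snd (z t) > 0" using pp[OF t(1,2)] p0 by simp
    ultimately have "snd (z t) = snd w" using sw by (auto simp add: power2_eq_iff)
    with t show ?thesis by (auto simp: prod_eq_iff)
  qed
  with r show ?thesis by blast
qed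

lemma cover_neg:
  assumes sz: "sol z" and neg: "snd (z t0) < 0"
  shows "\<exists>r>0. \<forall>w. en w = en (z t0) \<longrightarrow> dist w (z t0) < r \<longrightarrow> (\<exists>t. z t = w)"
proof -
  define p0 where "p0 = snd (z t0)"
  define q0 where "q0 = fst (z t0)"
  have p0: "p0 < 0" using neg by (simp add: p0_def)
  then have "- p0 / 2 > 0" by simp
  then obtain \<eta> where \<eta>: "\<eta> > 0" "\<And>t. \<bar>t - t0\<bar> < \<eta> \<Longrightarrow> \<bar>snd (z t) - p0\<bar> < - p0 / 2"
    using sol_cont2[OF sz, of t0] unfolding continuous_at_eps_delta dist_real_def p0_def by blast
  define h where "h = \<eta> / 2"
  have h: "h > 0" using \<eta> by (simp add: h_def)
  have pp: "snd (z t) < p0 / 2" if "t0 - h \<le> t" "t \<le> t0 + h" for t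
  proof -
    have tt: "\<bar>t - t0\<bar> < \<eta>" using that \<eta>(1) by (auto simp: h_def)
    have "\<bar>snd (z t) - p0\<bar> < \<bar>p0\<bar> / 2" using \<eta>(2)[OF tt] p0 by simp
    then show ?thesis using p0 by (simp only: abs_less_iff) linarith
  qed
  have decr: "fst (z b) < fst (z a)" if "t0 - h \<le> a" "a < b" "b \<le> t0 + h" for a b
  proof (rule DERIV_neg_imp_decreasing[OF \<open>a < b\<close>])
    fix x assume "a \<le> x" "x \<le> b"
    then have "snd (z x) < 0" using pp[of x] that p0 by auto
    then show "\<exists>y. ((\<lambda>s. fst (z s)) has_real_derivative y) (at x) \<and> y < 0"
      using sol_D1[OF sz, of x] by blast
  qed
  define r where "r = min (- p0 / 2) (min (fst (z (t0 - h)) - q0) (q0 - fst (z (t0 + h))))"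
  have r: "r > 0" using decr[of "t0 - h" t0] decr[of t0 "t0 + h"] h p0
    by (auto simp: r_def q0_def)
  have "\<exists>t. z t = w" if w: "en w = en (z t0)" "dist w (z t0) < r" for w
  proof -
    have d1: "\<bar>fst w - q0\<bar> < r" using fst_dist[of w "z t0"] w by (simp add: q0_def)
    have d2: "\<bar>snd w - p0\<bar> < r" using snd_dist[of w "z t0"] w by (simp add: p0_def)
    have "\<bar>snd w - p0\<bar> < - p0 / 2" using d2 by (simp add: r_def)
    then have sw: "snd w < 0" using p0 by (simp only: abs_less_iff) linarith
    have "fst (z (t0 + h)) \<le> fst w" "fst w \<le> fst (z (t0 - h))" using d1 by (auto simp: r_def)
    then obtain t where t: "t0 - h \<le> t" "t \<le> t0 + h" "fst (z t) = fst w"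
      using IVT2[of "\<lambda>s. fst (z s)" "t0 + h" "fst w" "t0 - h"] sol_cont1[OF sz] h by auto
    have "en (z t) = en w" using w en_sol[OF sz, of t t0] by simp
    then have "(- snd (z t))\<^sup>2 = (- snd w)\<^sup>2" using t by (simp add: en_def)
    moreover have "snd (z t) < 0" using pp[OF t(1,2)] p0 by simp
    ultimately have "- snd (z t) = - snd w" using sw by (auto simp add: power2_eq_iff)
    with t show ?thesis by (auto simp: prod_eq_iff)
  qed
  with r show ?thesis by blast
qed

lemma cover_zero_neg:
  assumes sz: "sol z" and p0: "snd (z t0) = 0" and u: "U' (fst (z t0)) < 0"
  shows "\<exists>r>0. \<forall>w. en w = en (z t0) \<longrightarrow> dist w (z t0) < r \<longrightarrow> (\<exists>t. z t = w)"
proof -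
  define q0 where "q0 = fst (z t0)"
  have "\<bar>U' q0\<bar> / 2 > 0" using u by (simp add: q0_def)
  then obtain \<delta> where \<delta>: "\<delta> > 0" "\<And>x. \<bar>x - q0\<bar> < \<delta> \<Longrightarrow> \<bar>U' x - U' q0\<bar> < \<bar>U' q0\<bar> / 2"
    using cU'[of q0] unfolding continuous_at_eps_delta dist_real_def by blast
  have uneg: "U' x < 0" if "\<bar>x - q0\<bar> < \<delta>" for x
  proof -
    have "\<bar>U' x - U' q0\<bar> < \<bar>U' q0\<bar> / 2" using \<delta>(2)[OF that] .
    then show ?thesis using u unfolding q0_def by (simp only: abs_less_iff) linarith
  qed
  obtain \<eta> where \<eta>: "\<eta> > 0" "\<And>t. \<bar>t - t0\<bar> < \<eta> \<Longrightarrow> \<bar>fst (z t) - q0\<bar> < \<delta>"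
    using sol_cont1[OF sz, of t0] \<delta>(1) unfolding continuous_at_eps_delta dist_real_def q0_def by blast
  define h where "h = \<eta> / 2"
  have h: "h > 0" using \<eta> by (simp add: h_def)
  have near: "\<bar>fst (z t) - q0\<bar> < \<delta>" if "t0 - h \<le> t" "t \<le> t0 + h" for t
  proof -
    have tt: "\<bar>t - t0\<bar> < \<eta>" using that \<eta>(1) by (auto simp: h_def)
    show ?thesis using \<eta>(2)[OF tt] .
  qed
  have mono_p: "snd (z a) < snd (z b)" if "t0 - h \<le> a" "a < b" "b \<le> t0 + h" for a b
  proof (rule DERIV_pos_imp_increasing[OF \<open>a < b\<close>])
    fix x assume "a \<le> x" "x \<le> b"
    then have "U' (fst (z x)) < 0" using uneg near[of x] that by auto
    then show "\<exists>y. ((\<lambda>s. snd (z s)) has_real_derivative y) (at x) \<and> 0 < y"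
      using sol_D2[OF sz, of x] by (intro exI[of _ "- U' (fst (z x))"]) auto
  qed
  have mono_U: "U a \<noteq> U b" if "\<bar>a - q0\<bar> < \<delta>" "\<bar>b - q0\<bar> < \<delta>" "a < b" for a b
  proof -
    have "U b < U a"
    proof (rule DERIV_neg_imp_decreasing[OF \<open>a < b\<close>])
      fix x assume "a \<le> x" "x \<le> b"
      then have "\<bar>x - q0\<bar> < \<delta>" using that by auto
      then show "\<exists>y. (U has_real_derivative y) (at x) \<and> y < 0"
        using uneg dU by blast
    qed
    then show ?thesis by simp
  qed
  define r where "r = min \<delta> (min (- snd (z (t0 - h))) (snd (z (t0 + h))))"
  have r: "r > 0" using mono_p[of "t0 - h" t0] mono_p[of t0 "t0 + h"] h \<delta>(1) p0
    by (auto simp: r_def)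
  have "\<exists>t. z t = w" if w: "en w = en (z t0)" "dist w (z t0) < r" for w
  proof -
    have d1: "\<bar>fst w - q0\<bar> < r" using fst_dist[of w "z t0"] w by (simp add: q0_def)
    have d2: "\<bar>snd w - 0\<bar> < r" using snd_dist[of w "z t0"] w p0 by simp
    have "snd (z (t0 - h)) \<le> snd w" "snd w \<le> snd (z (t0 + h))" using d2 by (auto simp: r_def)
    then obtain t where t: "t0 - h \<le> t" "t \<le> t0 + h" "snd (z t) = snd w"
      using IVT[of "\<lambda>s. snd (z s)" "t0 - h" "snd w" "t0 + h"] sol_cont2[OF sz] h by auto
    have "en (z t) = en w" using w en_sol[OF sz, of t t0] by simp
    then have eqU: "U (fst (z t)) = U (fst w)" using t by (simp add: en_def)
    have n1: "\<bar>fst (z t) - q0\<bar> < \<delta>" using near t by auto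
    have n2: "\<bar>fst w - q0\<bar> < \<delta>" using d1 by (simp add: r_def)
    have "fst (z t) = fst w"
    proof (rule ccontr)
      assume "fst (z t) \<noteq> fst w"
      then consider "fst (z t) < fst w" | "fst w < fst (z t)" by linarith
      then show False
        using mono_U[OF n1 n2] mono_U[OF n2 n1] eqU by cases auto
    qed
    with t show ?thesis by (auto simp: prod_eq_iff)
  qed
  with r show ?thesis by blast
qed

lemma cover_zero_pos:
  assumes sz: "sol z" and p0: "snd (z t0) = 0" and u: "U' (fst (z t0)) > 0"
  shows "\<exists>r>0. \<forall>w. en w = en (z t0) \<longrightarrow> dist w (z t0) < r \<longrightarrow> (\<exists>t. z t = w)"
proof -
  define q0 where "q0 = fst (z t0)"
  have "\<bar>U' q0\<bar> / 2 > 0" using u by (simp add: q0_def)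
  then obtain \<delta> where \<delta>: "\<delta> > 0" "\<And>x. \<bar>x - q0\<bar> < \<delta> \<Longrightarrow> \<bar>U' x - U' q0\<bar> < \<bar>U' q0\<bar> / 2"
    using cU'[of q0] unfolding continuous_at_eps_delta dist_real_def by blast
  have uneg: "U' x > 0" if "\<bar>x - q0\<bar> < \<delta>" for x
  proof -
    have "\<bar>U' x - U' q0\<bar> < \<bar>U' q0\<bar> / 2" using \<delta>(2)[OF that] .
    then show ?thesis using u unfolding q0_def by (simp only: abs_less_iff) linarith
  qed
  obtain \<eta> where \<eta>: "\<eta> > 0" "\<And>t. \<bar>t - t0\<bar> < \<eta> \<Longrightarrow> \<bar>fst (z t) - q0\<bar> < \<delta>"
    using sol_cont1[OF sz, of t0] \<delta>(1) unfolding continuous_at_eps_delta dist_real_def q0_def by blast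
  define h where "h = \<eta> / 2"
  have h: "h > 0" using \<eta> by (simp add: h_def)
  have near: "\<bar>fst (z t) - q0\<bar> < \<delta>" if "t0 - h \<le> t" "t \<le> t0 + h" for t
  proof -
    have tt: "\<bar>t - t0\<bar> < \<eta>" using that \<eta>(1) by (auto simp: h_def)
    show ?thesis using \<eta>(2)[OF tt] .
  qed
  have mono_p: "snd (z a) > snd (z b)" if "t0 - h \<le> a" "a < b" "b \<le> t0 + h" for a b
  proof (rule DERIV_neg_imp_decreasing[OF \<open>a < b\<close>])
    fix x assume "a \<le> x" "x \<le> b"
    then have "U' (fst (z x)) > 0" using uneg near[of x] that by auto
    then show "\<exists>y. ((\<lambda>s. snd (z s)) has_real_derivative y) (at x) \<and> y < 0"
      using sol_D2[OF sz, of x] by (intro exI[of _ "- U' (fst (z x))"]) auto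
  qed
  have mono_U: "U a \<noteq> U b" if "\<bar>a - q0\<bar> < \<delta>" "\<bar>b - q0\<bar> < \<delta>" "a < b" for a b
  proof -
    have "U b > U a"
    proof (rule DERIV_pos_imp_increasing[OF \<open>a < b\<close>])
      fix x assume "a \<le> x" "x \<le> b"
      then have "\<bar>x - q0\<bar> < \<delta>" using that by auto
      then show "\<exists>y. (U has_real_derivative y) (at x) \<and> 0 < y"
        using uneg dU by blast
    qed
    then show ?thesis by simp
  qed
  define r where "r = min \<delta> (min (snd (z (t0 - h))) (- snd (z (t0 + h))))"
  have r: "r > 0" using mono_p[of "t0 - h" t0] mono_p[of t0 "t0 + h"] h \<delta>(1) p0
    by (auto simp: r_def)
  have "\<exists>t. z t = w" if w: "en w = en (z t0)" "dist w (z t0) < r" for w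
  proof -
    have d1: "\<bar>fst w - q0\<bar> < r" using fst_dist[of w "z t0"] w by (simp add: q0_def)
    have d2: "\<bar>snd w - 0\<bar> < r" using snd_dist[of w "z t0"] w p0 by simp
    have "snd (z (t0 + h)) \<le> snd w" "snd w \<le> snd (z (t0 - h))" using d2 by (auto simp: r_def)
    then obtain t where t: "t0 - h \<le> t" "t \<le> t0 + h" "snd (z t) = snd w"
      using IVT2[of "\<lambda>s. snd (z s)" "t0 + h" "snd w" "t0 - h"] sol_cont2[OF sz] h by auto
    have "en (z t) = en w" using w en_sol[OF sz, of t t0] by simp
    then have eqU: "U (fst (z t)) = U (fst w)" using t by (simp add: en_def)
    have n1: "\<bar>fst (z t) - q0\<bar> < \<delta>" using near t by auto
    have n2: "\<bar>fst w - q0\<bar> < \<delta>" using d1 by (simp add: r_def)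
    have "fst (z t) = fst w"
    proof (rule ccontr)
      assume "fst (z t) \<noteq> fst w"
      then consider "fst (z t) < fst w" | "fst w < fst (z t)" by linarith
      then show False
        using mono_U[OF n1 n2] mono_U[OF n2 n1] eqU by cases auto
    qed
    with t show ?thesis by (auto simp: prod_eq_iff)
  qed
  with r show ?thesis by blast
qed

lemma local_cover:
  assumes sz: "sol z" and reg: "regE (en (z t0))"
  shows "\<exists>r>0. \<forall>w. en w = en (z t0) \<longrightarrow> dist w (z t0) < r \<longrightarrow> (\<exists>t. z t = w)"
proof (cases "snd (z t0)" "0::real" rule: linorder_cases)
  case less then show ?thesis using cover_neg[OF sz] by blast
next
  case greater then show ?thesis using cover_pos[OF sz] by blast
next
  case equal
  then have "U' (fst (z t0)) \<noteq> 0" using reg unfolding regE_def en_def by force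
  then consider "U' (fst (z t0)) < 0" | "U' (fst (z t0)) > 0" by linarith
  then show ?thesis using cover_zero_neg[OF sz equal] cover_zero_pos[OF sz equal] by cases blast+
qed

lemma min_turn:
  assumes sz: "sol z" and reg: "regE (en (z s))" and mn: "\<forall>t. fst (z s) \<le> fst (z t)"
  shows "snd (z s) = 0 \<and> U' (fst (z s)) < 0"
proof -
  have p0: "snd (z s) = 0"
    using DERIV_local_min[OF sol_D1[OF sz, of s], of 1] mn by auto
  then have ne: "U' (fst (z s)) \<noteq> 0" using reg unfolding regE_def en_def by force
  have "\<not> U' (fst (z s)) > 0"
  proof
    assume "U' (fst (z s)) > 0"
    then have "- U' (fst (z s)) < 0" by simp
    from DERIV_neg_dec_right[OF sol_D2[OF sz, of s] this] obtain d where
      d: "d > 0" "\<forall>h>0. h < d \<longrightarrow> snd (z (s + h)) < snd (z s)" by blast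
    define h where "h = d / 2"
    have h: "h > 0" "h < d" using d by (auto simp: h_def)
    obtain c where c: "s < c" "c < s + h" "fst (z (s + h)) - fst (z s) = (s + h - s) * snd (z c)"
      using MVT2[of s "s + h" "\<lambda>t. fst (z t)" "\<lambda>t. snd (z t)"] sol_D1[OF sz] h by auto
    have "snd (z c) < 0" using d(2)[rule_format, of "c - s"] c h p0 by auto
    then have "h * snd (z c) < 0" using h(1) by (simp add: mult_pos_neg)
    then have "fst (z (s + h)) < fst (z s)" using c(3) by simp
    with mn show False by (meson not_le)
  qed
  with ne p0 show ?thesis by linarith
qed

lemma max_turn:
  assumes sz: "sol z" and reg: "regE (en (z s))" and mx: "\<forall>t. fst (z t) \<le> fst (z s)"
  shows "snd (z s) = 0 \<and> U' (fst (z s)) > 0"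
proof -
  have p0: "snd (z s) = 0"
    using DERIV_local_max[OF sol_D1[OF sz, of s], of 1] mx by auto
  then have ne: "U' (fst (z s)) \<noteq> 0" using reg unfolding regE_def en_def by force
  have "\<not> U' (fst (z s)) < 0"
  proof
    assume "U' (fst (z s)) < 0"
    then have "- U' (fst (z s)) > 0" by simp
    from DERIV_pos_inc_right[OF sol_D2[OF sz, of s] this] obtain d where
      d: "d > 0" "\<forall>h>0. h < d \<longrightarrow> snd (z s) < snd (z (s + h))" by blast
    define h where "h = d / 2"
    have h: "h > 0" "h < d" using d by (auto simp: h_def)
    obtain c where c: "s < c" "c < s + h" "fst (z (s + h)) - fst (z s) = (s + h - s) * snd (z c)"
      using MVT2[of s "s + h" "\<lambda>t. fst (z t)" "\<lambda>t. snd (z t)"] sol_D1[OF sz] h by auto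
    have "snd (z c) > 0" using d(2)[rule_format, of "c - s"] c h p0 by auto
    then have "h * snd (z c) > 0" using h(1) by simp
    then have "fst (z (s + h)) > fst (z s)" using c(3) by simp
    with mx show False by (meson not_le)
  qed
  with ne p0 show ?thesis by linarith
qed

end


lemma periodic_nat: fixes f :: "real \<Rightarrow> 'a" assumes "\<And>t. f (t + T) = f t" shows "f (t + real n * T) = f t"
proof (induction n)
  case 0 then show ?case by simp
next
  case (Suc n)
  have "t + real (Suc n) * T = (t + real n * T) + T" by (simp add: algebra_simps)
  then have "f (t + real (Suc n) * T) = f (t + real n * T)" using assms by metis
  then show ?case using Suc by simp
qed

lemma periodic_int: fixes f :: "real \<Rightarrow> 'a" assumes per: "\<And>t. f (t + T) = f t" shows "f (t + of_int n * T) = f t"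
proof (cases "n \<ge> 0")
  case True
  then have e: "of_int n = real (nat n)" by simp
  show ?thesis unfolding e by (rule periodic_nat[of f T, OF per])
next
  case False
  then have e: "of_int n = - real (nat (- n))" by simp
  have "f ((t + of_int n * T) + real (nat (- n)) * T) = f (t + of_int n * T)"
    by (rule periodic_nat[of f T, OF per])
  moreover have "(t + of_int n * T) + real (nat (- n)) * T = t" unfolding e by simp
  ultimately show ?thesis by metis
qed

lemma periodic_range:
  fixes f :: "real \<Rightarrow> 'a"
  assumes T: "T > 0" and per: "\<And>t. f (t + T) = f t"
  shows "range f = f ` {0..T}"
proof
  show "range f \<subseteq> f ` {0..T}"
  proof
    fix y assume "y \<in> range f"
    then obtain t where y: "y = f t" by blast
    define n where "n = \<lfloor>t / T\<rfloor>"
    define t' where "t' = t - of_int n * T"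
    have "of_int n \<le> t / T" "t / T < of_int n + 1" unfolding n_def by linarith+
    then have "of_int n * T \<le> t" "t < (of_int n + 1) * T"
      using T by (simp_all add: field_simps)
    then have "t' \<in> {0..T}" by (auto simp: t'_def algebra_simps)
    moreover have "f (t' + of_int n * T) = f t'" by (rule periodic_int[of f T, OF per])
    moreover have "t' + of_int n * T = t" by (simp add: t'_def)
    ultimately show "y \<in> f ` {0..T}" using y by (metis image_eqI)
  qed
qed auto

lemma periodic_minmax:
  fixes f :: "real \<Rightarrow> real"
  assumes T: "T > 0" and per: "\<And>t. f (t + T) = f t" and c: "continuous_on UNIV f"
  shows "\<exists>a b. \<forall>t. f a \<le> f t \<and> f t \<le> f b"
proof -
  have c': "continuous_on {0..T} f" using c continuous_on_subset by blast
  obtain a where a: "a \<in> {0..T}" "\<forall>y\<in>{0..T}. f a \<le> f y"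
    using continuous_attains_inf[OF compact_Icc _ c'] T by auto
  obtain b where b: "b \<in> {0..T}" "\<forall>y\<in>{0..T}. f y \<le> f b"
    using continuous_attains_sup[OF compact_Icc _ c'] T by auto
  have rr: "range f = f ` {0..T}" by (rule periodic_range[OF T]) (rule per)
  have "f t \<in> f ` {0..T}" for t using rr by blast
  then show ?thesis using a b by (metis imageE)
qed

lemma cis_eq_int: assumes "cis a = cis b" shows "\<exists>k::int. a = b + 2 * pi * of_int k"
proof -
  have "exp (\<i> * complex_of_real a) = exp (\<i> * complex_of_real b)" using assms by (simp add: cis_conv_exp)
  then obtain n :: int where "\<i> * complex_of_real a = \<i> * complex_of_real b + (of_int (2 * n) * pi) * \<i>"
    using exp_eq by blast
  then have "Im (\<i> * complex_of_real a) = Im (\<i> * complex_of_real b + (of_int (2 * n) * pi) * \<i>)" by simp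
  then have "a = b + 2 * pi * of_int n" by simp
  then show ?thesis by blast
qed

lemma cis_close:
  assumes r: "r > 0"
  shows "\<exists>\<delta>>0. \<forall>a c. cmod (cis a - cis c) < \<delta> \<longrightarrow> (\<exists>k::int. \<bar>a + 2 * pi * of_int k - c\<bar> < r)"
proof -
  have "isCont (\<lambda>x. Ln x) 1"
    by (rule isCont_Ln') (auto simp: complex_nonpos_Reals_iff)
  then obtain \<delta> where \<delta>: "\<delta> > 0" "\<And>x. dist x 1 < \<delta> \<Longrightarrow> dist (Ln x) (Ln 1) < r"
    using r unfolding continuous_at_eps_delta by blast
  have "\<exists>k::int. \<bar>a + 2 * pi * of_int k - c\<bar> < r" if ac: "cmod (cis a - cis c) < \<delta>" for a c
  proof -
    define z where "z = cis (a - c)"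
    have "z - 1 = (cis a - cis c) / cis c" by (simp add: z_def cis_divide[symmetric] field_simps)
    then have "cmod (z - 1) = cmod (cis a - cis c)" by (simp add: norm_divide)
    then have "dist z 1 < \<delta>" using ac by (simp add: dist_norm)
    then have lz: "cmod (Ln z) < r" using \<delta>(2) by (simp add: dist_norm)
    have z0: "z \<noteq> 0" by (simp add: z_def)
    have "Re (Ln z) = 0" using Re_Ln[OF z0] by (simp add: z_def)
    then have "Ln z = \<i> * complex_of_real (Im (Ln z))" by (simp add: complex_eq_iff)
    then have "exp (\<i> * complex_of_real (Im (Ln z))) = z" using exp_Ln[OF z0] by metis
    then have "cis (Im (Ln z)) = cis (a - c)" by (simp add: z_def cis_conv_exp)
    then obtain k :: int where k: "Im (Ln z) = (a - c) + 2 * pi * of_int k" using cis_eq_int by blast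
    have "\<bar>Im (Ln z)\<bar> < r" using lz abs_Im_le_cmod[of "Ln z"] by linarith
    then show ?thesis using k by (intro exI[of _ k]) (simp add: algebra_simps)
  qed
  with \<delta> show ?thesis by blast
qed

lemma cyl_proj_cont: "continuous_on S cyl_proj"
  unfolding cyl_proj_def by (intro continuous_on_Pair continuous_on_cis continuous_on_fst continuous_on_snd continuous_on_id)

lemma cyl_proj_shift: "cyl_proj (a + 2 * pi * of_int k, b) = cyl_proj (a, b)"
proof -
  have "cis (a + 2 * pi * of_int k) = cis a"
    by (simp add: cis.ctr complex_eq_iff sin_add cos_add)
  then show ?thesis by (simp add: cyl_proj_def)
qed


context hsys begin

lemma comp_cover:
  assumes sz: "sol z" and T: "T > 0" and per: "\<And>t. z (t + T) = z t"
    and reg: "regE E" and E: "en (z 0) = E"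
    and C: "C \<in> components {w. en w = E}" and z0: "z 0 \<in> C"
  shows "C \<subseteq> range z"
proof -
  define R where "R = range z"
  have R: "R = z ` {0..T}" unfolding R_def by (rule periodic_range[OF T]) (rule per)
  have "compact R" unfolding R by (intro compact_continuous_image sol_cont[OF sz] compact_Icc)
  then have cR: "closed R" by (rule compact_imp_closed)
  have enz: "en (z t) = E" for t using en_sol[OF sz, of t 0] E by simp
  have CS: "C \<subseteq> {w. en w = E}" using C by (rule in_components_subset)
  have conC: "connected C" using C by (rule in_components_connected)
  have "openin (top_of_set C) (C \<inter> R)"
    unfolding openin_euclidean_subtopology_iff
  proof (intro conjI ballI)
    show "C \<inter> R \<subseteq> C" by blast
    fix x assume x: "x \<in> C \<inter> R"
    then obtain t0 where t0: "x = z t0" by (auto simp: R_def)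
    obtain r where r: "r > 0" "\<forall>w. en w = en (z t0) \<longrightarrow> dist w (z t0) < r \<longrightarrow> (\<exists>t. z t = w)"
      using local_cover[OF sz] reg enz[of t0] by metis
    show "\<exists>e>0. \<forall>x'\<in>C. dist x' x < e \<longrightarrow> x' \<in> C \<inter> R"
    proof (intro exI[of _ r] conjI ballI impI)
      fix x' assume "x' \<in> C" "dist x' x < r"
      then have "en x' = en (z t0)" "dist x' (z t0) < r" using CS enz[of t0] t0 by auto
      then obtain t where "z t = x'" using r(2) by blast
      then show "x' \<in> C \<inter> R" using \<open>x' \<in> C\<close> by (auto simp: R_def)
    qed (use r in auto)
  qed
  moreover have "closedin (top_of_set C) (C \<inter> R)"
    using cR closedin_closed_Int by blast
  ultimately have "C \<inter> R = {} \<or> C \<inter> R = C" using conC unfolding connected_clopen by blast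
  moreover have "z 0 \<in> C \<inter> R" using z0 by (auto simp: R_def)
  ultimately show ?thesis unfolding R_def by blast
qed

lemma sol_trans:
  assumes sz: "sol z" and perU': "\<And>x. U' (x + 2 * pi) = U' x"
  shows "sol (\<lambda>t. (fst (z t) + 2 * pi * of_int k, snd (z t)))"
proof -
  have pk: "U' (x + 2 * pi * of_int k) = U' x" for x
    using periodic_int[of U' "2 * pi", OF perU', of x k] by (simp add: mult.commute mult.left_commute)
  show ?thesis unfolding sol_def
  proof
    fix t
    show "((\<lambda>s. fst (fst (z s) + 2 * pi * of_int k, snd (z s))) has_real_derivative
            snd (fst (z t) + 2 * pi * of_int k, snd (z t))) (at t) \<and>
          ((\<lambda>s. snd (fst (z s) + 2 * pi * of_int k, snd (z s))) has_real_derivative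
            - U' (fst (fst (z t) + 2 * pi * of_int k, snd (z t)))) (at t)"
      using sol_D1[OF sz, of t] sol_D2[OF sz, of t] pk
      by (auto intro!: derivative_eq_intros)
  qed
qed

lemma comp_cover_cyl:
  assumes sz: "sol z" and T: "T > 0" and per: "\<And>t. cyl_proj (z (t + T)) = cyl_proj (z t)"
    and perU: "\<And>x. U (x + 2 * pi) = U x"
    and reg: "regE E" and E: "en (z 0) = E"
    and C: "C \<in> components (cyl_proj ` {w. en w = E})" and z0: "cyl_proj (z 0) \<in> C"
  shows "C \<subseteq> cyl_proj ` range z"
proof -
  define R where "R = cyl_proj ` range z"
  have "range (cyl_proj \<circ> z) = (cyl_proj \<circ> z) ` {0..T}"
    by (rule periodic_range[OF T]) (simp add: per)
  then have R: "R = (cyl_proj \<circ> z) ` {0..T}" unfolding R_def by (simp add: image_comp)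
  have "compact R" unfolding R
    by (intro compact_continuous_image continuous_on_compose sol_cont[OF sz] compact_Icc cyl_proj_cont)
  then have cR: "closed R" by (rule compact_imp_closed)
  have enz: "en (z t) = E" for t using en_sol[OF sz, of t 0] E by simp
  have pk: "U (x + 2 * pi * of_int k) = U x" for x k
    using periodic_int[of U "2 * pi", OF perU, of x k] by (simp add: mult.commute mult.left_commute)
  have CS: "C \<subseteq> cyl_proj ` {w. en w = E}" using C by (rule in_components_subset)
  have conC: "connected C" using C by (rule in_components_connected)
  have "openin (top_of_set C) (C \<inter> R)"
    unfolding openin_euclidean_subtopology_iff
  proof (intro conjI ballI)
    show "C \<inter> R \<subseteq> C" by blast
    fix x assume x: "x \<in> C \<inter> R"
    then obtain t0 where t0: "x = cyl_proj (z t0)" by (auto simp: R_def)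
    obtain r where r: "r > 0" "\<forall>w. en w = en (z t0) \<longrightarrow> dist w (z t0) < r \<longrightarrow> (\<exists>t. z t = w)"
      using local_cover[OF sz] reg enz[of t0] by metis
    obtain \<delta> where \<delta>: "\<delta> > 0" "\<forall>a c. cmod (cis a - cis c) < \<delta> \<longrightarrow> (\<exists>k::int. \<bar>a + 2 * pi * of_int k - c\<bar> < r / 2)"
      using cis_close[of "r / 2"] r(1) by auto
    show "\<exists>e>0. \<forall>x'\<in>C. dist x' x < e \<longrightarrow> x' \<in> C \<inter> R"
    proof (intro exI[of _ "min \<delta> (r / 2)"] conjI ballI impI)
      fix x' assume x'C: "x' \<in> C" and dx: "dist x' x < min \<delta> (r / 2)"
      then obtain v where v: "x' = cyl_proj v" "en v = E" using CS by auto
      have "dist (fst x') (fst x) \<le> dist x' x" by (rule dist_fst_le)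
      then have "cmod (cis (fst v) - cis (fst (z t0))) < \<delta>"
        using dx v t0 by (simp add: cyl_proj_def dist_norm)
      then obtain k :: int where k: "\<bar>fst v + 2 * pi * of_int k - fst (z t0)\<bar> < r / 2" using \<delta>(2) by blast
      have "dist (snd x') (snd x) \<le> dist x' x" by (rule dist_snd_le)
      then have s2: "\<bar>snd v - snd (z t0)\<bar> < r / 2"
        using dx v t0 by (simp add: cyl_proj_def dist_real_def)
      define v' where "v' = (fst v + 2 * pi * of_int k, snd v)"
      have "en v' = en v" by (simp add: v'_def en_def pk)
      then have ev': "en v' = en (z t0)" using v enz by simp
      have "dist v' (z t0) \<le> \<bar>fst v + 2 * pi * of_int k - fst (z t0)\<bar> + \<bar>snd v - snd (z t0)\<bar>"
      proof -
        have "dist v' (z t0) = sqrt ((fst v + 2 * pi * of_int k - fst (z t0))\<^sup>2 + (snd v - snd (z t0))\<^sup>2)"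
          unfolding v'_def using dist_Pair_Pair[of "fst v + 2 * pi * of_int k" "snd v" "fst (z t0)" "snd (z t0)"]
          by (simp add: dist_real_def)
        then show ?thesis using sqrt_sum_squares_le_sum_abs by simp
      qed
      then have "dist v' (z t0) < r" using k s2 by linarith
      then obtain t where t: "z t = v'" using r(2) ev' by blast
      have "cyl_proj (z t) = x'" unfolding t v'_def v(1)
        using cyl_proj_shift[of "fst v" k "snd v"] by simp
      then show "x' \<in> C \<inter> R" using x'C by (auto simp: R_def)
    qed (use r \<delta> in auto)
  qed
  moreover have "closedin (top_of_set C) (C \<inter> R)"
    using cR closedin_closed_Int by blast
  ultimately have "C \<inter> R = {} \<or> C \<inter> R = C" using conC unfolding connected_clopen by blast
  moreover have "cyl_proj (z 0) \<in> C \<inter> R" using z0 by (auto simp: R_def)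
  ultimately show ?thesis unfolding R_def by blast
qed

end


definition Vl :: "real \<Rightarrow> real \<Rightarrow> real \<Rightarrow> real \<Rightarrow> real \<Rightarrow> real" where "Vl d m1 m2 h l = - d*(m1+m2)*cosh l - h*d\<^sup>2*(cosh l)\<^sup>2"
definition "Vl'" :: "real \<Rightarrow> real \<Rightarrow> real \<Rightarrow> real \<Rightarrow> real \<Rightarrow> real" where "Vl' d m1 m2 h l = - d*(m1+m2) * sinh l - h*d\<^sup>2*(2 * sinh l*cosh l)"
definition "Vl''" :: "real \<Rightarrow> real \<Rightarrow> real \<Rightarrow> real \<Rightarrow> real \<Rightarrow> real" where "Vl'' d m1 m2 h l = - d*(m1+m2)*cosh l - h*d\<^sup>2*(2 * (cosh l)\<^sup>2 + 2 * (sinh l)\<^sup>2)"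
definition Unu :: "real \<Rightarrow> real \<Rightarrow> real \<Rightarrow> real \<Rightarrow> real \<Rightarrow> real" where "Unu d m1 m2 h n = d*(m1-m2) * sin n + h*d\<^sup>2*(sin n)\<^sup>2"
definition "Unu'" :: "real \<Rightarrow> real \<Rightarrow> real \<Rightarrow> real \<Rightarrow> real \<Rightarrow> real" where "Unu' d m1 m2 h n = d*(m1-m2)*cos n + h*d\<^sup>2*(2 * sin n*cos n)"
definition "Unu''" :: "real \<Rightarrow> real \<Rightarrow> real \<Rightarrow> real \<Rightarrow> real \<Rightarrow> real" where "Unu'' d m1 m2 h n = - d*(m1-m2) * sin n + h*d\<^sup>2*(2 * (cos n)\<^sup>2 - 2 * (sin n)\<^sup>2)"

lemma dVl: "(Vl d m1 m2 h has_real_derivative Vl' d m1 m2 h x) (at x)"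
  unfolding Vl_def[abs_def] Vl'_def
  by (auto intro!: derivative_eq_intros simp: power2_eq_square algebra_simps)
lemma dVl': "(Vl' d m1 m2 h has_real_derivative Vl'' d m1 m2 h x) (at x)"
  unfolding Vl'_def[abs_def] Vl''_def
  by (auto intro!: derivative_eq_intros simp: power2_eq_square algebra_simps)
lemma dUn: "(Unu d m1 m2 h has_real_derivative Unu' d m1 m2 h x) (at x)"
  unfolding Unu_def[abs_def] Unu'_def
  by (auto intro!: derivative_eq_intros simp: power2_eq_square algebra_simps)
lemma dUn': "(Unu' d m1 m2 h has_real_derivative Unu'' d m1 m2 h x) (at x)"
  unfolding Unu'_def[abs_def] Unu''_def
  by (auto intro!: derivative_eq_intros simp: power2_eq_square algebra_simps)

lemma hsys_L: "hsys (Vl d m1 m2 h) (Vl' d m1 m2 h) (Vl'' d m1 m2 h)"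
  by unfold_locales (rule dVl, rule dVl', unfold Vl''_def, intro continuous_intros)
lemma hsys_N: "hsys (Unu d m1 m2 h) (Unu' d m1 m2 h) (Unu'' d m1 m2 h)"
  by unfold_locales (rule dUn, rule dUn', unfold Unu''_def, intro continuous_intros)

lemma Hlam_eq: "Hlam d m1 m2 h l p = p\<^sup>2 / 2 + Vl d m1 m2 h l"
  by (simp add: Hlam_def Vl_def)
lemma Hnu_eq: "Hnu d m1 m2 h n p = p\<^sup>2 / 2 + Unu d m1 m2 h n"
  by (simp add: Hnu_def Unu_def)

lemma deriv_p: "deriv (\<lambda>p. p\<^sup>2 / 2 + c) p = (p::real)"
  by (rule DERIV_imp_deriv) (auto intro!: derivative_eq_intros)
lemma deriv_q: "(V has_real_derivative V' q) (at q) \<Longrightarrow> deriv (\<lambda>q. (p::real)\<^sup>2 / 2 + V q) q = V' q"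
  by (rule DERIV_imp_deriv) (auto intro!: derivative_eq_intros)

lemma dqL: "deriv (\<lambda>q. p\<^sup>2 / 2 + Vl d m1 m2 h q) q = Vl' d m1 m2 h q"
  by (rule deriv_q[OF dVl])
lemma dqN: "deriv (\<lambda>q. p\<^sup>2 / 2 + Unu d m1 m2 h q) q = Unu' d m1 m2 h q"
  by (rule deriv_q[OF dUn])
lemma dqL0: "deriv (Vl d m1 m2 h) q = Vl' d m1 m2 h q"
  by (rule DERIV_imp_deriv[OF dVl])
lemma dqN0: "deriv (Unu d m1 m2 h) q = Unu' d m1 m2 h q"
  by (rule DERIV_imp_deriv[OF dUn])

lemma ham_L: "hamiltonian_solution (Hlam d m1 m2 h) z = hsys.sol (Vl' d m1 m2 h) z"
  unfolding hamiltonian_solution_def hsys.sol_def[OF hsys_L] Hlam_eq deriv_p by (simp only: dqL)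
lemma ham_N: "hamiltonian_solution (Hnu d m1 m2 h) z = hsys.sol (Unu' d m1 m2 h) z"
  unfolding hamiltonian_solution_def hsys.sol_def[OF hsys_N] Hnu_eq deriv_p by (simp only: dqN)

lemma reg_L: "regular_value (Hlam d m1 m2 h) E = hsys.regE (Vl d m1 m2 h) (Vl' d m1 m2 h) E"
  unfolding regular_value_def hsys.regE_def[OF hsys_L] Hlam_eq deriv_p by (simp add: dqL dqL0)
lemma reg_N: "regular_value (Hnu d m1 m2 h) E = hsys.regE (Unu d m1 m2 h) (Unu' d m1 m2 h) E"
  unfolding regular_value_def hsys.regE_def[OF hsys_N] Hnu_eq deriv_p by (simp add: dqN dqN0)

lemma lev_L: "{(l, p). Hlam d m1 m2 h l p = E} = {w. hsys.en (Vl d m1 m2 h) w = E}"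
  unfolding hsys.en_def[OF hsys_L] Hlam_eq by auto
lemma lev_N: "{(l, p). Hnu d m1 m2 h l p = E} = {w. hsys.en (Unu d m1 m2 h) w = E}"
  unfolding hsys.en_def[OF hsys_N] Hnu_eq by auto



lemma trig_shift:
  "\<exists>\<sigma>::real. (\<sigma> = 1 \<or> \<sigma> = -1) \<and> (\<forall>x. cos (x + of_int n * pi) = \<sigma> * cos x \<and> sin (x + of_int n * pi) = \<sigma> * sin x)"
proof -
  have pc: "cos (y + of_int k * (2 * pi)) = cos y" for y k
    by (rule periodic_int[of cos "2*pi"]) (simp add: cos_periodic)
  have ps: "sin (y + of_int k * (2 * pi)) = sin y" for y k
    by (rule periodic_int[of sin "2*pi"]) (simp add: sin_periodic)
  have "n = 2 * (n div 2) \<or> n = 2 * (n div 2) + 1" by presburger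
  then obtain k where "n = 2 * k \<or> n = 2 * k + 1" by blast
  then show ?thesis
  proof
    assume n: "n = 2 * k"
    have e: "x + of_int n * pi = x + of_int k * (2 * pi)" for x by (simp add: n algebra_simps)
    have "cos (x + of_int n * pi) = cos x \<and> sin (x + of_int n * pi) = sin x" for x
      unfolding e using pc ps by blast
    then show ?thesis by (intro exI[of _ 1]) auto
  next
    assume n: "n = 2 * k + 1"
    have e: "x + of_int n * pi = (x + pi) + of_int k * (2 * pi)" for x by (simp add: n algebra_simps)
    have "cos (x + of_int n * pi) = - cos x \<and> sin (x + of_int n * pi) = - sin x" for x
      unfolding e pc ps by (simp add: cos_periodic_pi sin_periodic_pi)
    then show ?thesis by (intro exI[of _ "-1"]) auto
  qed
qed

lemma coll_int: "collision_nu (pi / 2 + of_int j * pi)"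
proof -
  have "j = 2 * (j div 2) \<or> j = 2 * (j div 2) + 1" by presburger
  then obtain k where "j = 2 * k \<or> j = 2 * k + 1" by blast
  then show ?thesis
  proof
    assume "j = 2 * k"
    then show ?thesis unfolding collision_nu_def by (intro exI[of _ k]) (simp add: algebra_simps)
  next
    assume "j = 2 * k + 1"
    then show ?thesis unfolding collision_nu_def by (intro exI[of _ "k + 1"]) (simp add: algebra_simps)
  qed
qed

lemma ivt_any:
  fixes f :: "real \<Rightarrow> real"
  assumes c: "\<And>t. isCont f t" and "f a \<le> y" "y \<le> f b"
  shows "\<exists>s. f s = y"
proof (cases "a \<le> b")
  case True then show ?thesis using IVT[of f a y b] assms by auto
next
  case False then show ?thesis using IVT2[of f a y b] assms by auto
qed

lemma nu_collision:
  assumes d: "d > 0" and h: "h < 0"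
    and sy: "hsys.sol (Unu' d m1 m2 h) y" and T: "T > 0"
    and per: "\<And>t. cyl_proj (y (t + T)) = cyl_proj (y t)"
    and reg: "hsys.regE (Unu d m1 m2 h) (Unu' d m1 m2 h) g"
    and E: "hsys.en (Unu d m1 m2 h) (y 0) = g"
  shows "\<exists>s. collision_nu (fst (y s))"
proof (rule ccontr)
  interpret N: hsys "Unu d m1 m2 h" "Unu' d m1 m2 h" "Unu'' d m1 m2 h" by (rule hsys_N)
  assume nc: "\<not> (\<exists>s. collision_nu (fst (y s)))"
  define \<nu> where "\<nu> s = fst (y s)" for s
  have c\<nu>: "isCont \<nu> t" for t unfolding \<nu>_def by (rule N.sol_cont1[OF sy])
  define j0 where "j0 = \<lfloor>(\<nu> 0 - pi / 2) / pi\<rfloor>"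
  define lo where "lo = pi / 2 + of_int j0 * pi"
  have "of_int j0 \<le> (\<nu> 0 - pi / 2) / pi" "(\<nu> 0 - pi / 2) / pi < of_int j0 + 1"
    unfolding j0_def by linarith+
  then have l0: "lo \<le> \<nu> 0" "\<nu> 0 < lo + pi"
    by (simp_all add: lo_def field_simps)
  have nlo: "\<nu> s \<noteq> pi / 2 + of_int j * pi" for s j
    using nc coll_int[of j] unfolding \<nu>_def by metis
  have hi_eq: "lo + pi = pi / 2 + of_int (j0 + 1) * pi" by (simp add: lo_def algebra_simps)
  have bnd: "lo < \<nu> s \<and> \<nu> s < lo + pi" for s
  proof (rule ccontr)
    assume "\<not> (lo < \<nu> s \<and> \<nu> s < lo + pi)"
    then consider "\<nu> s \<le> lo" | "lo + pi \<le> \<nu> s" by linarith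
    then show False
    proof cases
      case 1
      then obtain s' where "\<nu> s' = lo" using ivt_any[of \<nu> s lo 0] c\<nu> l0 by auto
      then show False using nlo[of s' j0] by (simp add: lo_def)
    next
      case 2
      then obtain s' where "\<nu> s' = lo + pi" using ivt_any[of \<nu> 0 "lo + pi" s] c\<nu> l0 by auto
      then show False using nlo[of s' "j0 + 1"] hi_eq by simp
    qed
  qed
  have per\<nu>: "\<nu> (t + T) = \<nu> t" for t
  proof -
    have "cis (\<nu> (t + T)) = cis (\<nu> t)" using per[of t] by (simp add: cyl_proj_def \<nu>_def)
    then obtain k :: int where k: "\<nu> (t + T) = \<nu> t + 2 * pi * of_int k" using cis_eq_int by blast
    have "\<bar>2 * pi * of_int k\<bar> < pi" using bnd[of t] bnd[of "t + T"] k by (simp only: abs_less_iff) linarith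
    then have "pi * (2 * \<bar>real_of_int k\<bar>) < pi * 1" by (simp add: abs_mult)
    then have "2 * \<bar>real_of_int k\<bar> < 1" using pi_gt_zero mult_less_cancel_left_pos by blast
    then have "k = 0" by linarith
    with k show ?thesis by simp
  qed
  obtain smin smax where mm: "\<forall>t. \<nu> smin \<le> \<nu> t \<and> \<nu> t \<le> \<nu> smax"
    using periodic_minmax[of T \<nu>, OF T per\<nu>] c\<nu> continuous_at_imp_continuous_on by blast
  have enc: "hsys.en (Unu d m1 m2 h) (y s) = g" for s using N.en_sol[OF sy, of s 0] E by simp
  have u1: "Unu' d m1 m2 h (\<nu> smin) < 0"
    using N.min_turn[OF sy, of smin] reg enc mm unfolding \<nu>_def by auto
  have u2: "Unu' d m1 m2 h (\<nu> smax) > 0"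
    using N.max_turn[OF sy, of smax] reg enc mm unfolding \<nu>_def by auto
  have lt: "\<nu> smin < \<nu> smax" using mm u1 u2 by (metis less_asym order_le_less)
  define A where "A = d * (m1 - m2)"
  define c where "c = h * d\<^sup>2"
  have cneg: "c < 0" using d h by (simp add: c_def mult_neg_pos)
  define \<psi>1 where "\<psi>1 = \<nu> smin - (lo + pi / 2)"
  define \<psi>2 where "\<psi>2 = \<nu> smax - (lo + pi / 2)"
  have psb: "- (pi / 2) < \<psi>1" "\<psi>1 < \<psi>2" "\<psi>2 < pi / 2"
    using bnd[of smin] bnd[of smax] lt by (auto simp: \<psi>1_def \<psi>2_def)
  have sinlt: "sin \<psi>1 < sin \<psi>2" using sin_monotone_2pi[of \<psi>1 \<psi>2] psb by linarith
  have cos1: "cos \<psi>1 > 0" using psb by (intro cos_gt_zero_pi) auto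
  have cos2: "cos \<psi>2 > 0" using psb by (intro cos_gt_zero_pi) auto
  have lsh: "lo + pi / 2 = of_int (j0 + 1) * pi" by (simp add: lo_def algebra_simps)
  obtain \<sigma> :: real where \<sigma>: "\<sigma> = 1 \<or> \<sigma> = -1"
    "\<And>x. cos (x + of_int (j0 + 1) * pi) = \<sigma> * cos x \<and> sin (x + of_int (j0 + 1) * pi) = \<sigma> * sin x"
    using trig_shift[of "j0 + 1"] by blast
  have e1: "\<nu> smin = \<psi>1 + of_int (j0+1) * pi" using lsh by (simp add: \<psi>1_def)
  have e2: "\<nu> smax = \<psi>2 + of_int (j0+1) * pi" using lsh by (simp add: \<psi>2_def)
  have f1: "Unu' d m1 m2 h (\<nu> smin) = cos \<psi>1 * (\<sigma> * A + 2 * c * sin \<psi>1)"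
    using \<sigma>(1) \<sigma>(2)[of \<psi>1] unfolding e1 Unu'_def A_def c_def by (auto simp: algebra_simps)
  have f2: "Unu' d m1 m2 h (\<nu> smax) = cos \<psi>2 * (\<sigma> * A + 2 * c * sin \<psi>2)"
    using \<sigma>(1) \<sigma>(2)[of \<psi>2] unfolding e2 Unu'_def A_def c_def by (auto simp: algebra_simps)
  have g1: "\<sigma> * A + 2 * c * sin \<psi>1 < 0" using u1 f1 cos1 by (simp add: mult_less_0_iff)
  have g2: "\<sigma> * A + 2 * c * sin \<psi>2 > 0" using u2 f2 cos2 by (simp add: zero_less_mult_iff)
  have "2 * c * sin \<psi>2 < 2 * c * sin \<psi>1" using sinlt cneg by (simp add: mult_less_cancel_left)
  then show False using g1 g2 by linarith
qed



lemma sign_const: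
  fixes f :: "real \<Rightarrow> real"
  assumes c: "\<And>t. isCont f t" and nz: "\<And>t. f t \<noteq> 0"
  shows "(\<forall>t. f t > 0) \<or> (\<forall>t. f t < 0)"
proof (rule ccontr)
  assume "\<not> ((\<forall>t. f t > 0) \<or> (\<forall>t. f t < 0))"
  then obtain a b where "f a \<le> 0" "0 \<le> f b" by (meson not_le)
  then obtain s where "f s = 0" using ivt_any[OF c] by blast
  with nz show False by blast
qed

lemma lam_no_zero:
  assumes d: "d > 0" and m1: "m1 > 0" and m2: "m2 > 0" and h: "h < 0"
    and sx: "hsys.sol (Vl' d m1 m2 h) x" and T: "T > 0" and per: "\<And>t. x (t + T) = x t"
    and reg: "hsys.regE (Vl d m1 m2 h) (Vl' d m1 m2 h) (- g)"
    and E: "hsys.en (Vl d m1 m2 h) (x 0) = - g"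
    and nz: "\<And>t. fst (x t) \<noteq> 0"
  shows "g > d * (m1 + m2) + h * d\<^sup>2 \<and> d * (m1 + m2) > - 2 * h * d\<^sup>2"
proof -
  interpret L: hsys "Vl d m1 m2 h" "Vl' d m1 m2 h" "Vl'' d m1 m2 h" by (rule hsys_L)
  define lam where "lam t = fst (x t)" for t
  have clam: "isCont lam t" for t unfolding lam_def by (rule L.sol_cont1[OF sx])
  have perlam: "lam (t + T) = lam t" for t by (simp add: lam_def per)
  obtain smin smax where mm: "\<forall>t. lam smin \<le> lam t \<and> lam t \<le> lam smax"
    using periodic_minmax[of T lam, OF T perlam] clam continuous_at_imp_continuous_on by blast
  have enc: "hsys.en (Vl d m1 m2 h) (x s) = - g" for s using L.en_sol[OF sx, of s 0] E by simp
  define a where "a = d * (m1 + m2)"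
  define b where "b = - h * d\<^sup>2"
  have b: "b > 0" using d h by (simp add: b_def mult_neg_pos)
  obtain l where l: "l \<noteq> 0" "Vl d m1 m2 h l = - g" "sinh l * Vl' d m1 m2 h l < 0"
  proof -
    from sign_const[of lam] clam nz consider "\<forall>t. lam t > 0" | "\<forall>t. lam t < 0" unfolding lam_def by blast
    then show ?thesis
    proof cases
      case 1
      have t: "snd (x smin) = 0 \<and> Vl' d m1 m2 h (fst (x smin)) < 0"
        using L.min_turn[OF sx, of smin] reg enc mm unfolding lam_def by auto
      have "Vl d m1 m2 h (fst (x smin)) = - g" using enc[of smin] t by (simp add: L.en_def)
      moreover have "sinh (fst (x smin)) > 0" using 1 by (simp add: lam_def)
      ultimately show ?thesis using that[of "fst (x smin)"] t nz[of smin] by (simp add: mult_pos_neg)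
    next
      case 2
      have t: "snd (x smax) = 0 \<and> Vl' d m1 m2 h (fst (x smax)) > 0"
        using L.max_turn[OF sx, of smax] reg enc mm unfolding lam_def by auto
      have "Vl d m1 m2 h (fst (x smax)) = - g" using enc[of smax] t by (simp add: L.en_def)
      moreover have "sinh (fst (x smax)) < 0" using 2 by (simp add: lam_def)
      ultimately show ?thesis using that[of "fst (x smax)"] t nz[of smax] by (simp add: mult_neg_pos)
    qed
  qed
  define c where "c = cosh l"
  have "cosh l \<noteq> 1" using cosh_real_one_iff[of l] l(1) by simp
  then have c1: "c > 1" using cosh_real_ge_1[of l] unfolding c_def by linarith
  have "sinh l * Vl' d m1 m2 h l = (sinh l)\<^sup>2 * (- a + 2 * b * c)"
    by (simp add: Vl'_def a_def b_def c_def power2_eq_square algebra_simps)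
  moreover have "(sinh l)\<^sup>2 > 0" using l(1) by simp
  ultimately have ac: "- a + 2 * b * c < 0" using l(3) by (simp add: mult_less_0_iff)
  have gdef: "g = a * c - b * c\<^sup>2" using l(2) by (simp add: Vl_def a_def b_def c_def)
  have "b * (c + 1) < b * (2 * c)" using b c1 by (intro mult_strict_left_mono) auto
  then have pos: "a - b * (c + 1) > 0" using ac by linarith
  have "(c - 1) * (a - b * (c + 1)) > 0" using c1 pos by simp
  then have "g > a - b" unfolding gdef by (simp add: algebra_simps power2_eq_square)
  moreover have "a > 2 * b" using ac b c1 mult_strict_left_mono[of 1 c "2*b"] by linarith
  ultimately show ?thesis by (simp add: a_def b_def)
qed



lemma rot_contra:
  assumes d: "d > 0" and m1: "m1 > 0" and m2: "m2 > 0" and h: "h < 0"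
    and gbig: "g > d * (m1 + m2) + h * d\<^sup>2" and a2b: "d * (m1 + m2) > - 2 * h * d\<^sup>2"
    and sy: "hsys.sol (Unu' d m1 m2 h) y" and T: "T > 0"
    and per: "\<And>t. cyl_proj (y (t + T)) = cyl_proj (y t)"
    and E: "hsys.en (Unu d m1 m2 h) (y 0) = g"
    and Cn: "Cn \<in> components (cyl_proj ` {w. hsys.en (Unu d m1 m2 h) w = g})"
    and y0: "cyl_proj (y 0) \<in> Cn"
    and con: "contractible_in Cn cylinder"
  shows False
proof -
  interpret N: hsys "Unu d m1 m2 h" "Unu' d m1 m2 h" "Unu'' d m1 m2 h" by (rule hsys_N)
  define A where "A = d * (m1 - m2)"
  define a where "a = d * (m1 + m2)"
  define b where "b = - h * d\<^sup>2"
  have b: "b > 0" using d h by (simp add: b_def mult_neg_pos)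
  have a2: "a > 2 * b" using a2b by (simp add: a_def b_def)
  have ga: "g > a - b" using gbig by (simp add: a_def b_def)
  have Aa: "\<bar>A\<bar> \<le> a" using d m1 m2 by (simp add: A_def a_def abs_mult)
  have Ueq: "Unu d m1 m2 h v = A * sin v - b * (sin v)\<^sup>2" for v
    by (simp add: Unu_def A_def b_def)
  have Ub: "Unu d m1 m2 h v \<le> a - b" for v
  proof -
    define s where "s = sin v"
    have s1: "\<bar>s\<bar> \<le> 1" by (simp add: s_def)
    have "A * s \<le> \<bar>A\<bar> * \<bar>s\<bar>" by (metis abs_ge_self abs_mult)
    also have "\<dots> \<le> a * \<bar>s\<bar>" using Aa by (simp add: mult_right_mono)
    finally have As: "A * s \<le> a * \<bar>s\<bar>" .
    have "a - b * (1 + \<bar>s\<bar>) \<ge> 0" using a2 b s1 mult_left_mono[of "1 + \<bar>s\<bar>" 2 b] by linarith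
    then have "(1 - \<bar>s\<bar>) * (a - b * (1 + \<bar>s\<bar>)) \<ge> 0" using s1 by simp
    then have "a * \<bar>s\<bar> - b * \<bar>s\<bar>\<^sup>2 \<le> a - b" by (simp add: algebra_simps power2_eq_square)
    then show ?thesis using As by (simp add: Ueq s_def[symmetric])
  qed
  define \<nu> where "\<nu> t = fst (y t)" for t
  define p where "p t = snd (y t)" for t
  have enc: "N.en (y t) = g" for t using N.en_sol[OF sy, of t 0] E by simp
  have p2: "(p t)\<^sup>2 = 2 * (g - Unu d m1 m2 h (\<nu> t))" for t
    using enc[of t] by (simp add: N.en_def p_def \<nu>_def field_simps)
  have pnz: "p t \<noteq> 0" for t using p2[of t] Ub[of "\<nu> t"] ga by auto
  have cp: "isCont p t" for t unfolding p_def by (rule N.sol_cont2[OF sy])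
  have c\<nu>: "isCont \<nu> t" for t unfolding \<nu>_def by (rule N.sol_cont1[OF sy])
  obtain \<sigma> :: real where \<sigma>: "\<sigma> = 1 \<or> \<sigma> = -1" "\<And>t. \<sigma> * p t > 0"
  proof -
    from sign_const[of p, OF cp pnz] show ?thesis
    proof
      assume "\<forall>t. p t > 0" then show ?thesis using that[of 1] by auto
    next
      assume "\<forall>t. p t < 0" then show ?thesis using that[of "-1"] by auto
    qed
  qed
  have d\<nu>: "(\<nu> has_real_derivative p t) (at t)" for t
    unfolding \<nu>_def p_def using N.sol_D1[OF sy] by blast
  have neq: "\<nu> T \<noteq> \<nu> 0"
    using \<sigma>(1)
  proof
    assume s1: "\<sigma> = 1"
    have "\<nu> 0 < \<nu> T"
      by (rule DERIV_pos_imp_increasing[OF T]) (use d\<nu> \<sigma>(2) s1 in auto)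
    then show ?thesis by simp
  next
    assume s1: "\<sigma> = -1"
    have "\<nu> T < \<nu> 0"
    proof (rule DERIV_neg_imp_decreasing[OF T])
      fix x show "\<exists>y. (\<nu> has_real_derivative y) (at x) \<and> y < 0"
        using d\<nu>[of x] \<sigma>(2)[of x] s1 by (intro exI[of _ "p x"]) auto
    qed
    then show ?thesis by simp
  qed
  have "cis (\<nu> T) = cis (\<nu> 0)" using per[of 0] by (simp add: cyl_proj_def \<nu>_def)
  then obtain k :: int where k: "\<nu> T = \<nu> 0 + 2 * pi * of_int k" using cis_eq_int by blast
  have k0: "k \<noteq> 0" using neq k by auto
  define F where "F w = sqrt (2 * (g - (A * Im w - b * (Im w)\<^sup>2)))" for w :: complex
  define \<psi> where "\<psi> w = (w, \<sigma> * F w)" for w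
  have cis_shift: "cis (x + 2 * pi * of_int m) = cis x" for x m
    using cyl_proj_shift[of x m 0] by (simp add: cyl_proj_def)
  have hit: "\<psi> w \<in> cyl_proj ` range y" if w: "w \<in> sphere 0 1" for w
  proof -
    have w1: "cmod w = 1" using w by simp
    then have w0: "w \<noteq> 0" by auto
    define \<theta> where "\<theta> = Arg w"
    have cth: "cis \<theta> = w" using cis_Arg[OF w0] w1 by (simp add: \<theta>_def sgn_div_norm)
    obtain t where t: "cis (\<nu> t) = w"
    proof (cases "k > 0")
      case True
      define m where "m = \<lceil>(\<nu> 0 - \<theta>) / (2 * pi)\<rceil>"
      have "(\<nu> 0 - \<theta>) / (2 * pi) \<le> of_int m" "of_int m < (\<nu> 0 - \<theta>) / (2 * pi) + 1"
        unfolding m_def by linarith+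
      then have mm: "\<nu> 0 \<le> \<theta> + 2 * pi * of_int m" "\<theta> + 2 * pi * of_int m < \<nu> 0 + 2 * pi"
        by (simp_all add: field_simps)
      have "2 * pi * 1 \<le> 2 * pi * of_int k" using True by (intro mult_left_mono) auto
      then have "\<theta> + 2 * pi * of_int m \<le> \<nu> T" using k mm by linarith
      then obtain t where tt: "\<nu> t = \<theta> + 2 * pi * of_int m" using ivt_any[of \<nu> 0 _ T] c\<nu> mm by blast
      have "cis (\<nu> t) = w" unfolding tt cis_shift cth ..
      then show ?thesis by (rule that)
    next
      case False
      then have kn: "k < 0" using k0 by simp
      define m where "m = \<lfloor>(\<nu> 0 - \<theta>) / (2 * pi)\<rfloor>"
      have "of_int m \<le> (\<nu> 0 - \<theta>) / (2 * pi)" "(\<nu> 0 - \<theta>) / (2 * pi) < of_int m + 1"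
        unfolding m_def by linarith+
      then have mm: "\<theta> + 2 * pi * of_int m \<le> \<nu> 0" "\<nu> 0 - 2 * pi < \<theta> + 2 * pi * of_int m"
        by (simp_all add: field_simps)
      have "2 * pi * of_int k \<le> 2 * pi * (-1)" using kn by (intro mult_left_mono) auto
      then have "\<nu> T \<le> \<theta> + 2 * pi * of_int m" using k mm by linarith
      then obtain t where tt: "\<nu> t = \<theta> + 2 * pi * of_int m" using ivt_any[of \<nu> T _ 0] c\<nu> mm by blast
      have "cis (\<nu> t) = w" unfolding tt cis_shift cth ..
      then show ?thesis by (rule that)
    qed
    have "Im (cis (\<nu> t)) = sin (\<nu> t)" by simp
    then have sinw: "sin (\<nu> t) = Im w" using t by simp
    have "A * Im w - b * (Im w)\<^sup>2 \<le> a - b" using Ub[of "\<nu> t"] by (simp add: Ueq sinw)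
    then have nn: "2 * (g - (A * Im w - b * (Im w)\<^sup>2)) \<ge> 0" using ga by (smt (verit))
    have "(p t)\<^sup>2 = (F w)\<^sup>2"
    proof -
      have "(F w)\<^sup>2 = 2 * (g - (A * Im w - b * (Im w)\<^sup>2))" unfolding F_def by (rule real_sqrt_pow2[OF nn])
      moreover have "(p t)\<^sup>2 = 2 * (g - (A * Im w - b * (Im w)\<^sup>2))" using p2[of t] by (simp add: Ueq sinw)
      ultimately show ?thesis by simp
    qed
    then have "sqrt ((p t)\<^sup>2) = sqrt ((F w)\<^sup>2)" by simp
    moreover have "F w \<ge> 0" unfolding F_def using nn by simp
    ultimately have ab: "\<bar>p t\<bar> = F w" by (simp only: real_sqrt_abs abs_of_nonneg)
    have "p t = \<sigma> * F w"
      using \<sigma>(1)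
    proof
      assume "\<sigma> = 1" then have "p t > 0" using \<sigma>(2)[of t] by simp
      then show ?thesis using ab \<open>\<sigma> = 1\<close> by simp
    next
      assume "\<sigma> = -1" then have "p t < 0" using \<sigma>(2)[of t] by simp
      then show ?thesis using ab \<open>\<sigma> = -1\<close> by simp
    qed
    then have "cyl_proj (y t) = \<psi> w" using t by (simp add: cyl_proj_def \<psi>_def \<nu>_def p_def)
    then show ?thesis by (metis rangeI image_eqI)
  qed
  have conn: "connected (cyl_proj ` range y)"
  proof -
    have "connected ((cyl_proj \<circ> y) ` UNIV)"
      by (intro connected_continuous_image continuous_on_compose N.sol_cont[OF sy] cyl_proj_cont connected_UNIV)
    then show ?thesis by (simp add: image_comp)
  qed
  have sub: "cyl_proj ` range y \<subseteq> cyl_proj ` {w. hsys.en (Unu d m1 m2 h) w = g}" using enc by auto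
  have "cyl_proj ` range y \<subseteq> Cn"
    by (rule components_maximal[OF Cn conn sub]) (use y0 in blast)
  then have S0: "\<psi> ` sphere 0 1 \<subseteq> Cn" using hit by blast
  obtain c where hc: "homotopic_with_canon (\<lambda>f. True) Cn cylinder id (\<lambda>x. c)"
    using con unfolding contractible_in_def by blast
  have h1: "homotopic_with_canon (\<lambda>f. True) (\<psi> ` sphere 0 1) cylinder id (\<lambda>x. c)"
    by (rule homotopic_with_subset_left[OF hc S0])
  have fcyl: "fst \<in> cylinder \<rightarrow> sphere (0::complex) 1"
    by (auto simp: cylinder_def cyl_proj_def)
  have h2: "homotopic_with_canon (\<lambda>f. True) (\<psi> ` sphere 0 1) (sphere 0 1) (fst \<circ> id) (fst \<circ> (\<lambda>x. c))"
    by (rule homotopic_with_compose_continuous_left[where p = "\<lambda>f. True"]) (use h1 fcyl continuous_on_fst[OF continuous_on_id] in auto)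
  have cpsi: "continuous_on (sphere 0 1) \<psi>"
    unfolding \<psi>_def F_def by (intro continuous_intros)
  have h3: "homotopic_with_canon (\<lambda>f. True) (sphere 0 1) (sphere 0 1) (fst \<circ> id \<circ> \<psi>) (fst \<circ> (\<lambda>x. c) \<circ> \<psi>)"
    by (rule homotopic_with_compose_continuous_right[where p = "\<lambda>f. True"]) (use h2 cpsi in auto)
  have "fst \<circ> id \<circ> \<psi> = id" by (auto simp: \<psi>_def)
  moreover have "fst \<circ> (\<lambda>x. c) \<circ> \<psi> = (\<lambda>x. fst c)" by auto
  ultimately have "homotopic_with_canon (\<lambda>f. True) (sphere 0 1) (sphere 0 1) id (\<lambda>x. fst c)"
    using h3 by simp
  then have "contractible (sphere (0::complex) 1)" unfolding contractible_def by blast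
  then show False using contractible_sphere[of "0::complex" 1] by simp
qed



lemma Unu_per: "Unu d m1 m2 h (x + 2 * pi) = Unu d m1 m2 h x"
  by (simp add: Unu_def)
lemma Unu'_per: "Unu' d m1 m2 h (x + 2 * pi) = Unu' d m1 m2 h x"
  by (simp add: Unu'_def)

theorem corollary5:
  fixes d m1 m2 h g Tl Tn :: real
    and Cl :: "(real \<times> real) set" and Cn :: "(complex \<times> real) set"
    and x y gl gn :: "real \<Rightarrow> real \<times> real"
  assumes "d > 0" and "m1 > 0" and "m2 > 0" and "h < 0"
    and "regular_value (Hlam d m1 m2 h) (- g)"
    and "regular_value (Hnu d m1 m2 h) g"
    and "Cl \<in> components {(l, p). Hlam d m1 m2 h l p = - g}" and "compact Cl"
    and "Cn \<in> components (cyl_proj ` {(n, p). Hnu d m1 m2 h n p = g})" and "compact Cn"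
    and typeSL: "contractible_in Cn cylinder \<or>
                 (\<not> contractible_in Cn cylinder \<and> (\<exists>p. (0, p) \<in> Cl))"
    and "hamiltonian_solution (Hlam d m1 m2 h) x" and "x 0 \<in> Cl" and "minimal_period x Tl"
    and "hamiltonian_solution (Hnu d m1 m2 h) y" and "cyl_proj (y 0) \<in> Cn"
    and "minimal_period (cyl_proj \<circ> y) Tn"
    and "hamiltonian_solution (Hlam d m1 m2 h) gl" and "gl 0 \<in> Cl"
    and "hamiltonian_solution (Hnu d m1 m2 h) gn" and "cyl_proj (gn 0) \<in> Cn"
    and avoid: "\<exists>\<epsilon>>0. \<forall>\<tau> s1 t1 s2 t2.
         x t1 = gl \<tau> \<longrightarrow> cyl_proj (y s1) = cyl_proj (gn \<tau>) \<longrightarrow>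
         fst (x t2) = 0 \<longrightarrow> collision_nu (fst (y s2)) \<longrightarrow>
         \<epsilon> \<le> flat_torus_dist (s1 / Tn, t1 / Tl) (s2 / Tn, t2 / Tl)"
  shows "Tn / Tl \<in> \<rat>"

proof (rule ccontr)
  assume irr: "Tn / Tl \<notin> \<rat>"
  interpret L: hsys "Vl d m1 m2 h" "Vl' d m1 m2 h" "Vl'' d m1 m2 h" by (rule hsys_L)
  interpret N: hsys "Unu d m1 m2 h" "Unu' d m1 m2 h" "Unu'' d m1 m2 h" by (rule hsys_N)
  have sx: "L.sol x" using assms(12) by (simp add: ham_L)
  have sgl: "L.sol gl" using assms(18) by (simp add: ham_L)
  have sy: "N.sol y" using assms(15) by (simp add: ham_N)
  have sgn: "N.sol gn" using assms(20) by (simp add: ham_N)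
  have regL: "L.regE (- g)" using assms(5) by (simp add: reg_L)
  have regN: "N.regE g" using assms(6) by (simp add: reg_N)
  have ClC: "Cl \<in> components {w. L.en w = - g}" using assms(7) by (simp add: lev_L)
  have CnC: "Cn \<in> components (cyl_proj ` {w. N.en w = g})" using assms(9) by (simp add: lev_N)
  have Tl: "Tl > 0" and perx: "\<And>t. x (t + Tl) = x t" using assms(14) by (auto simp: minimal_period_def)
  have Tn: "Tn > 0" and pery: "\<And>t. cyl_proj (y (t + Tn)) = cyl_proj (y t)"
    using assms(17) by (auto simp: minimal_period_def)
  have pU: "Unu d m1 m2 h (x + 2 * pi * of_int k) = Unu d m1 m2 h x" for x k
    using periodic_int[of "Unu d m1 m2 h" "2 * pi", OF Unu_per, of x k] by (simp add: mult.commute mult.left_commute)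
  have Ex: "L.en (x 0) = - g" using in_components_subset[OF ClC] assms(13) by auto
  have Ey: "N.en (y 0) = g"
  proof -
    obtain v where v: "cyl_proj (y 0) = cyl_proj v" "N.en v = g"
      using in_components_subset[OF CnC] assms(16) by auto
    then have "cis (fst (y 0)) = cis (fst v)" "snd (y 0) = snd v" by (auto simp: cyl_proj_def)
    then obtain k :: int where k: "fst (y 0) = fst v + 2 * pi * of_int k" using cis_eq_int by blast
    have "N.en (y 0) = N.en v" unfolding N.en_def k \<open>snd (y 0) = snd v\<close> pU ..
    with v show ?thesis by simp
  qed
  have ClR: "Cl \<subseteq> range x" by (rule L.comp_cover[OF sx Tl perx regL Ex ClC assms(13)])
  have CnR: "Cn \<subseteq> cyl_proj ` range y"
    by (rule N.comp_cover_cyl[OF sy Tn pery Unu_per regN Ey CnC assms(16)])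
  obtain c1 where c1: "gl 0 = x c1" using ClR assms(19) by auto
  have glx: "gl \<tau> = x (\<tau> + c1)" for \<tau>
    using L.sol_unique[OF sgl L.sol_shift[OF sx, of c1], of 0 \<tau>] c1 by simp
  obtain c2 where c2: "cyl_proj (gn 0) = cyl_proj (y c2)" using CnR assms(21) by auto
  have gny: "cyl_proj (gn \<tau>) = cyl_proj (y (\<tau> + c2))" for \<tau>
  proof -
    have "cis (fst (gn 0)) = cis (fst (y c2))" "snd (gn 0) = snd (y c2)" using c2 by (auto simp: cyl_proj_def)
    then obtain k :: int where k: "fst (gn 0) = fst (y c2) + 2 * pi * of_int k" using cis_eq_int by blast
    define z where "z t = (fst (y (t + c2)) + 2 * pi * of_int k, snd (y (t + c2)))" for t
    have sz: "N.sol z" unfolding z_def by (rule N.sol_trans[OF N.sol_shift[OF sy] Unu'_per])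
    have "gn 0 = z 0" using k \<open>snd (gn 0) = snd (y c2)\<close> by (simp add: z_def prod_eq_iff)
    then have "gn \<tau> = z \<tau>" using N.sol_unique[OF sgn sz] by blast
    then show ?thesis by (simp add: z_def cyl_proj_shift)
  qed
  have "\<exists>t2. fst (x t2) = 0"
  proof (rule ccontr)
    assume nz0: "\<not> (\<exists>t2. fst (x t2) = 0)"
    then have nz: "\<And>t. fst (x t) \<noteq> 0" by blast
    show False using typeSL
    proof
      assume con: "contractible_in Cn cylinder"
      have gg: "g > d * (m1 + m2) + h * d\<^sup>2 \<and> d * (m1 + m2) > - 2 * h * d\<^sup>2"
        by (rule lam_no_zero[OF assms(1-4) sx Tl perx regL Ex nz])
      show False
        by (rule rot_contra[OF assms(1-4) conjunct1[OF gg] conjunct2[OF gg] sy Tn pery Ey CnC assms(16) con])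
    next
      assume "\<not> contractible_in Cn cylinder \<and> (\<exists>p. (0, p) \<in> Cl)"
      then obtain p where "(0, p) \<in> Cl" by blast
      then have "(0, p) \<in> range x" using ClR by blast
      then obtain t where "(0, p) = x t" by (rule rangeE)
      then show False using nz[of t] by (metis fst_conv)
    qed
  qed
  then obtain t2 where t2: "fst (x t2) = 0" by blast
  obtain s2 where s2: "collision_nu (fst (y s2))"
    using nu_collision[OF assms(1) assms(4) sy Tn pery regN Ey] by blast
  obtain \<epsilon> where \<epsilon>: "\<epsilon> > 0" and av: "\<And>\<tau> s1 t1 s2 t2.
         x t1 = gl \<tau> \<Longrightarrow> cyl_proj (y s1) = cyl_proj (gn \<tau>) \<Longrightarrow>
         fst (x t2) = 0 \<Longrightarrow> collision_nu (fst (y s2)) \<Longrightarrow>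
         \<epsilon> \<le> flat_torus_dist (s1 / Tn, t1 / Tl) (s2 / Tn, t2 / Tl)"
    using avoid by blast
  define \<alpha> where "\<alpha> = - (s2 - c2 + c1 - t2) / Tl"
  obtain hh kk :: int where kk: "\<bar>of_int kk * (Tn / Tl) - of_int hh - \<alpha>\<bar> < \<epsilon>"
    using sequence_of_fractional_parts_is_dense[OF irr \<epsilon>, of \<alpha>] by blast
  define \<tau> where "\<tau> = s2 - c2 + of_int kk * Tn"
  define s1 where "s1 = \<tau> + c2"
  define t1 where "t1 = \<tau> + c1"
  have "\<epsilon> \<le> flat_torus_dist (s1 / Tn, t1 / Tl) (s2 / Tn, t2 / Tl)"
    by (rule av[of t1 \<tau> s1 t2 s2]) (auto simp: t1_def s1_def glx gny t2 s2)
  also have "\<dots> \<le> dist (s1 / Tn, t1 / Tl) ((s2 / Tn, t2 / Tl) + (of_int kk, of_int hh))"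
    unfolding flat_torus_dist_def
  proof (rule cINF_lower)
    show "bdd_below ((\<lambda>k. dist (s1 / Tn, t1 / Tl) ((s2 / Tn, t2 / Tl) + k)) ` (\<int> \<times> \<int>))"
      by (rule bdd_belowI[of _ 0]) auto
    show "(of_int kk, of_int hh) \<in> \<int> \<times> \<int>" by auto
  qed
  also have "\<dots> = \<bar>of_int kk * (Tn / Tl) - of_int hh - \<alpha>\<bar>"
  proof -
    have e1: "s1 / Tn - (s2 / Tn + of_int kk) = 0" using Tn by (simp add: s1_def \<tau>_def field_simps)
    have e2: "t1 / Tl - (t2 / Tl + of_int hh) = of_int kk * (Tn / Tl) - of_int hh - \<alpha>"
      using Tl by (simp add: t1_def \<tau>_def \<alpha>_def field_simps)
    show ?thesis
      using e1 e2 by (simp add: dist_Pair_Pair dist_real_def)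
  qed
  finally show False using kk by simp
qed


end
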